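(* Let $d\ge2$, $j\in[d-1]$, $\bar{\mathbf p}$ a $j$-critical direction, $\omega_0=\omega_0(n)=o(\log n)$ a function tending to infinity, and $\tau=1-\frac{1}{\omega_0}$. Then there exists a constant $c>0$ such that for any critical dimension $k\ge j$, with high probability there are at least $\exp(\frac{c\log n}{\omega_0})$ many copies of $M_{j,k}$ in $\mathcal G_\tau=\mathcal G(n,\tau\bar{\mathbf p})$.
   Context: Whp = with probability tending to $1$ as $n\to\infty$. $\mathcal G(n,\mathbf p)$: random complex on $[n]$ in which for each $k\in[d]$ each $(k+1)$-subset is independently an edge with probability $\min\{p_k,1\}$; the complex consists of all singletons and all nonempty subsets of edges. $j$-critical direction: $\bar{\mathbf p}$ is $j$-admissible if for each $1\le k\le d$ there are real constants $\bar\alpha_k,\bar\gamma_k$ and a function $\bar\beta_k(n)$ with $\bar p_k=\frac{\bar\alpha_k\log n+\bar\beta_k}{n^{k-j+\bar\gamma_k}}(k-j)!$ and (A1) at least one of $\bar\alpha_k,\bar\gamma_k$ zero, neither negative; (A2) if $\bar\alpha_k=0$ then $\bar\beta_k\equiv0$ or $\bar\beta_k>0$ with $\bar\beta_k=o(n^\varepsilon)$, $\bar\beta_k=\omega(n^{-\varepsilon})$ for every constant $\varepsilon>0$; (A3) if $\bar\gamma_k=0$ then $|\bar\beta_k|=o(\log n)$; (A4) some $k\in\{j+1,\dots,d\}$ has $\bar\alpha_k>0$. For $j\le k\le d$, $\bar p_k\ne0$: $\bar\lambda_k=j+1-\bar\gamma_k-(k-j+1)\sum_{i=j+1}^d\bar\alpha_i$;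 $\bar\mu_k=-(k-j+1)\sum_{i=j+1}^d\bar\beta_i/n^{\bar\gamma_i}$ plus $0$ if $\bar p_k>1$, $\log\log n$ if $\bar p_k\le1,\bar\alpha_k\ne0$, $\log\bar\beta_k$ if $\bar p_k\le1,\bar\alpha_k=0$; $\bar\nu_k=-\log((j+1)!)$ if $k=j$, $-\log(j!)-\log(k-j+1)+\log\bar\alpha_k$ if $k\ne j,\bar\alpha_k\ne0$, $-\log(j!)-\log(k-j+1)$ otherwise. $j$-critical: $j$-admissible with $\bar\lambda_k\log n+\bar\mu_k+\bar\nu_k\le0$ for all such $k$ and equality for some $k$. A critical dimension is an index $k$ with $j\le k\le d$, $\bar p_k\ne0$, $\bar\lambda_k=0$ and $\bar\mu_k=O(1)$. Copies of $M_{j,k}$: for $j+1\le k\le d$, a pair $(K,C)$ with $K$ a $k$-simplex and $C\subset K$, $|C|=j$, such that every simplex containing some $C\cup\{x\}$, $x\in K\setminus C$, is contained in $K$; for $k=j$, a pair $(K,C)$ with $K$ an isolated $j$-simplex (in no other simplex) and $C$ the first $j$ vertices of $K$ in increasing order. *)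

theory Defs
  imports "HOL-Probability.Probability" "HOL-Library.Landau_Symbols"
begin

definition cand_edges :: "nat \<Rightarrow> nat \<Rightarrow> nat set set" where
  "cand_edges n d = {S. S \<subseteq> {1..n} \<and> 2 \<le> card S \<and> card S \<le> d + 1}"

text \<open>Random edge set: each (k+1)-subset (1 <= k <= d) is independently an edge
  with probability min (q k) 1, where q k is the probability in dimension k.\<close>
definition random_edges :: "nat \<Rightarrow> nat \<Rightarrow> (nat \<Rightarrow> real) \<Rightarrow> nat set set pmf" where
  "random_edges n d q =
     map_pmf (\<lambda>f. {S \<in> cand_edges n d. f S})
       (Pi_pmf (cand_edges n d) False (\<lambda>S. bernoulli_pmf (min (q (card S - 1)) 1)))"

definition complex_of :: "nat \<Rightarrow> nat set set \<Rightarrow> nat set set" where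
  "complex_of n E = {{v} | v. v \<in> {1..n}} \<union> {T. T \<noteq> {} \<and> (\<exists>S\<in>E. T \<subseteq> S)}"

definition first_vertices :: "nat \<Rightarrow> nat set \<Rightarrow> nat set" where
  "first_vertices j K = {x \<in> K. card {y \<in> K. y < x} < j}"

definition copies :: "nat \<Rightarrow> nat \<Rightarrow> nat set set \<Rightarrow> (nat set \<times> nat set) set" where
  "copies j k X =
     (if k = j then
        {(K, C). K \<in> X \<and> card K = j + 1 \<and> (\<forall>L\<in>X. K \<subseteq> L \<longrightarrow> L = K)
                 \<and> C = first_vertices j K}
      else if j < k then
        {(K, C). K \<in> X \<and> card K = k + 1 \<and> C \<subseteq> K \<and> card C = j
                 \<and> (\<forall>x\<in>K - C. \<forall>L\<in>X. insert x C \<subseteq> L \<longrightarrow> L \<subseteq> K)}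
      else {})"

definition pbar :: "nat \<Rightarrow> (nat \<Rightarrow> real) \<Rightarrow> (nat \<Rightarrow> nat \<Rightarrow> real) \<Rightarrow> (nat \<Rightarrow> real)
                    \<Rightarrow> nat \<Rightarrow> nat \<Rightarrow> real" where
  "pbar j al be ga k n =
     (al k * ln (real n) + be k n) / real n powr (real k - real j + ga k) * fact (k - j)"

definition admissible :: "nat \<Rightarrow> nat \<Rightarrow> (nat \<Rightarrow> real) \<Rightarrow> (nat \<Rightarrow> nat \<Rightarrow> real)
                          \<Rightarrow> (nat \<Rightarrow> real) \<Rightarrow> bool" where
  "admissible d j al be ga \<longleftrightarrow>
     (\<forall>k\<in>{1..d}.
        (al k = 0 \<or> ga k = 0) \<and> al k \<ge> 0 \<and> ga k \<ge> 0
      \<and> (al k = 0 \<longrightarrow>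
           be k = (\<lambda>n. 0) \<or>
           ((\<forall>\<^sub>F n in at_top. be k n > 0) \<and>
            (\<forall>\<epsilon>>0. be k \<in> o(\<lambda>n. real n powr \<epsilon>) \<and> be k \<in> \<omega>(\<lambda>n. real n powr (- \<epsilon>)))))
      \<and> (ga k = 0 \<longrightarrow> (\<lambda>n. \<bar>be k n\<bar>) \<in> o(\<lambda>n. ln (real n))))
   \<and> (\<exists>k\<in>{j+1..d}. al k > 0)"

definition lam :: "nat \<Rightarrow> nat \<Rightarrow> (nat \<Rightarrow> real) \<Rightarrow> (nat \<Rightarrow> real) \<Rightarrow> nat \<Rightarrow> real" where
  "lam d j al ga k = real j + 1 - ga k - (real k - real j + 1) * (\<Sum>i\<in>{j+1..d}. al i)"

definition mu :: "nat \<Rightarrow> nat \<Rightarrow> (nat \<Rightarrow> real) \<Rightarrow> (nat \<Rightarrow> nat \<Rightarrow> real)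
                  \<Rightarrow> (nat \<Rightarrow> real) \<Rightarrow> nat \<Rightarrow> nat \<Rightarrow> real" where
  "mu d j al be ga k n =
     - (real k - real j + 1) * (\<Sum>i\<in>{j+1..d}. be i n / real n powr ga i)
     + (if pbar j al be ga k n > 1 then 0
        else if al k \<noteq> 0 then ln (ln (real n)) else ln (be k n))"

definition nu :: "nat \<Rightarrow> (nat \<Rightarrow> real) \<Rightarrow> nat \<Rightarrow> real" where
  "nu j al k =
     (if k = j then - ln (fact (j + 1))
      else if al k \<noteq> 0 then - ln (fact j) - ln (real k - real j + 1) + ln (al k)
      else - ln (fact j) - ln (real k - real j + 1))"

definition crit_expr :: "nat \<Rightarrow> nat \<Rightarrow> (nat \<Rightarrow> real) \<Rightarrow> (nat \<Rightarrow> nat \<Rightarrow> real)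
                        \<Rightarrow> (nat \<Rightarrow> real) \<Rightarrow> nat \<Rightarrow> nat \<Rightarrow> real" where
  "crit_expr d j al be ga k n =
     lam d j al ga k * ln (real n) + mu d j al be ga k n + nu j al k"

definition critical :: "nat \<Rightarrow> nat \<Rightarrow> (nat \<Rightarrow> real) \<Rightarrow> (nat \<Rightarrow> nat \<Rightarrow> real)
                        \<Rightarrow> (nat \<Rightarrow> real) \<Rightarrow> bool" where
  "critical d j al be ga \<longleftrightarrow>
     admissible d j al be ga
   \<and> (\<forall>k\<in>{j..d}. pbar j al be ga k \<noteq> (\<lambda>n. 0) \<longrightarrow>
        (\<forall>\<^sub>F n in at_top. crit_expr d j al be ga k n \<le> 0))
   \<and> (\<exists>k\<in>{j..d}. pbar j al be ga k \<noteq> (\<lambda>n. 0) \<and>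
        (\<forall>\<^sub>F n in at_top. crit_expr d j al be ga k n = 0))"

definition critical_dim :: "nat \<Rightarrow> nat \<Rightarrow> (nat \<Rightarrow> real) \<Rightarrow> (nat \<Rightarrow> nat \<Rightarrow> real)
                            \<Rightarrow> (nat \<Rightarrow> real) \<Rightarrow> nat \<Rightarrow> bool" where
  "critical_dim d j al be ga k \<longleftrightarrow>
     j \<le> k \<and> k \<le> d \<and> pbar j al be ga k \<noteq> (\<lambda>n. 0) \<and> lam d j al ga k = 0
   \<and> mu d j al be ga k \<in> O(\<lambda>n. 1)"

end

theory Submission
  imports Defs "HOL-Real_Asymp.Real_Asymp"
begin

lemma pmf_bern_T: "pmf (bernoulli_pmf x) True = max 0 (min 1 x)"
  by (simp add: bernoulli_pmf.rep_eq min.commute max.commute)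
lemma pmf_bern_F: "pmf (bernoulli_pmf x) False = 1 - max 0 (min 1 x)"
  by (simp add: bernoulli_pmf.rep_eq min.commute max.commute)

definition rho :: "(nat \<Rightarrow> real) \<Rightarrow> nat \<Rightarrow> real" where
  "rho q m = max 0 (min 1 (min (q (m - 1)) 1))"

lemma rho_nonneg: "0 \<le> rho q m" and rho_le1: "rho q m \<le> 1"
  by (auto simp: rho_def)

lemma finite_cand: "finite (cand_edges n d)"
  by (rule finite_subset[of _ "Pow {1..n}"]) (auto simp: cand_edges_def)

lemma prod_if_split:
  assumes "finite I" "P \<subseteq> I" "N \<subseteq> I" "P \<inter> N = {}"
  shows "(\<Prod>S\<in>I. (if S \<in> P then a S else if S \<in> N then b S else (1::real))) = prod a P * prod b N"
proof -
  let ?F = "\<lambda>S. (if S \<in> P then a S else if S \<in> N then b S else (1::real))"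
  have "prod ?F I = prod ?F (P \<union> N)"
    using assms by (intro prod.mono_neutral_right) auto
  also have "\<dots> = prod ?F P * prod ?F N"
    using assms by (intro prod.union_disjoint) (auto intro: finite_subset)
  also have "prod ?F P = prod a P" by (rule prod.cong) auto
  also have "prod ?F N = prod b N" using assms(4) by (intro prod.cong) auto
  finally show ?thesis .
qed

lemma prob_config:
  assumes "P \<subseteq> cand_edges n d" "N \<subseteq> cand_edges n d" "P \<inter> N = {}"
  shows "measure_pmf.prob (random_edges n d q) {E. P \<subseteq> E \<and> E \<inter> N = {}}
           = (\<Prod>S\<in>P. rho q (card S)) * (\<Prod>S\<in>N. 1 - rho q (card S))"
proof -
  let ?I = "cand_edges n d"
  let ?D = "\<lambda>S. bernoulli_pmf (min (q (card S - 1)) 1)"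
  define B where "B S = (if S \<in> P then {True} else if S \<in> N then {False} else UNIV)" for S
  have pre: "{f. P \<subseteq> {S \<in> ?I. f S} \<and> {S \<in> ?I. f S} \<inter> N = {}} = Pi ?I B"
    using assms by (auto simp: B_def Pi_def)
  have "measure_pmf.prob (random_edges n d q) {E. P \<subseteq> E \<and> E \<inter> N = {}}
        = measure_pmf.prob (Pi_pmf ?I False ?D) (Pi ?I B)"
    by (simp add: random_edges_def pre)
  also have "\<dots> = (\<Prod>S\<in>?I. measure_pmf.prob (?D S) (B S))"
    by (rule measure_Pi_pmf_Pi) (rule finite_cand)
  also have "\<dots> = (\<Prod>S\<in>?I. (if S \<in> P then rho q (card S) else if S \<in> N then 1 - rho q (card S) else 1))"
    by (intro prod.cong refl) (auto simp: B_def measure_pmf_single pmf_bern_T pmf_bern_F rho_def)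
  also have "\<dots> = (\<Prod>S\<in>P. rho q (card S)) * (\<Prod>S\<in>N. 1 - rho q (card S))"
    using assms finite_cand by (intro prod_if_split) auto
  finally show ?thesis .
qed



lemma prob_as_sum:
  fixes M :: "'e pmf"
  assumes "finite W" "set_pmf M \<subseteq> W"
  shows "measure_pmf.prob M A = (\<Sum>E\<in>W. pmf M E * (if E \<in> A then 1 else 0))"
proof -
  have "measure_pmf.prob M A = measure_pmf.prob M (A \<inter> set_pmf M)"
    by (simp add: measure_Int_set_pmf)
  also have "\<dots> = sum (pmf M) (A \<inter> set_pmf M)"
    using assms by (intro measure_measure_pmf_finite) (auto intro: finite_subset)
  also have "\<dots> = sum (pmf M) (W \<inter> A)"
    using assms by (intro sum.mono_neutral_left) (auto simp: set_pmf_eq)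
  also have "\<dots> = (\<Sum>E\<in>W. pmf M E * (if E \<in> A then 1 else 0))"
    using sum.inter_restrict[OF assms(1), of "pmf M" A] by (simp add: if_distrib cong: if_cong)
  finally show ?thesis .
qed

lemma card_as_sum:
  assumes "finite C"
  shows "real (card {a\<in>C. P a}) = (\<Sum>a\<in>C. if P a then 1 else 0)"
  using assms by (simp add: sum.inter_filter[symmetric])

lemma second_moment:
  fixes mm :: real and M :: "'e pmf" and Conf :: "'c set" and ev :: "'c \<Rightarrow> 'e \<Rightarrow> bool"
  assumes W: "finite W" "set_pmf M \<subseteq> W" and fC: "finite Conf"
    and mu_def: "mm = (\<Sum>a\<in>Conf. measure_pmf.prob M {E. ev a E})"
    and mupos: "mm > 0"
    and V: "(\<Sum>a\<in>Conf. \<Sum>b\<in>Conf. measure_pmf.prob M {E. ev a E \<and> ev b E}) \<le> V + mm\<^sup>2"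
  shows "measure_pmf.prob M {E. real (card {a\<in>Conf. ev a E}) < mm/2} \<le> 4 * V / mm\<^sup>2"
proof -
  define w where "w = pmf M"
  define X where "X E = (\<Sum>a\<in>Conf. if ev a E then 1 else (0::real))" for E
  have Xc: "real (card {a\<in>Conf. ev a E}) = X E" for E
    unfolding X_def using fC by (rule card_as_sum)
  have pw: "measure_pmf.prob M A = (\<Sum>E\<in>W. w E * (if E \<in> A then 1 else 0))" for A
    unfolding w_def using W by (rule prob_as_sum)
  have w0: "w E \<ge> 0" for E unfolding w_def by simp
  have s1: "(\<Sum>E\<in>W. w E) = 1"
    using pw[of UNIV] by simp
  have sX: "(\<Sum>E\<in>W. w E * X E) = mm"
  proof -
    have "(\<Sum>E\<in>W. w E * X E) = (\<Sum>a\<in>Conf. \<Sum>E\<in>W. w E * (if E \<in> {E. ev a E} then 1 else 0))"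
      unfolding X_def by (subst sum.swap) (simp add: sum_distrib_left)
    also have "\<dots> = mm" unfolding mu_def by (simp add: pw)
    finally show ?thesis .
  qed
  have sX2: "(\<Sum>E\<in>W. w E * (X E)\<^sup>2) \<le> V + mm\<^sup>2"
  proof -
    have "(\<Sum>E\<in>W. w E * (X E)\<^sup>2) =
          (\<Sum>E\<in>W. \<Sum>a\<in>Conf. \<Sum>b\<in>Conf. w E * (if E \<in> {E. ev a E \<and> ev b E} then 1 else 0))"
    proof (intro sum.cong refl)
      fix E
      have "(X E)\<^sup>2 = (\<Sum>a\<in>Conf. \<Sum>b\<in>Conf. (if ev a E then 1 else 0) * (if ev b E then 1 else (0::real)))"
        unfolding X_def power2_eq_square sum_product by simp
      also have "\<dots> = (\<Sum>a\<in>Conf. \<Sum>b\<in>Conf. (if E \<in> {E. ev a E \<and> ev b E} then 1 else 0))"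
        by (intro sum.cong refl) auto
      finally show "w E * (X E)\<^sup>2 = (\<Sum>a\<in>Conf. \<Sum>b\<in>Conf. w E * (if E \<in> {E. ev a E \<and> ev b E} then 1 else 0))"
        by (simp add: sum_distrib_left)
    qed
    also have "\<dots> = (\<Sum>a\<in>Conf. \<Sum>b\<in>Conf. \<Sum>E\<in>W. w E * (if E \<in> {E. ev a E \<and> ev b E} then 1 else 0))"
      by (subst sum.swap) (subst (2) sum.swap, rule refl)
    also have "\<dots> = (\<Sum>a\<in>Conf. \<Sum>b\<in>Conf. measure_pmf.prob M {E. ev a E \<and> ev b E})"
      by (simp add: pw)
    finally show ?thesis using V by simp
  qed
  have var: "(\<Sum>E\<in>W. w E * (X E - mm)\<^sup>2) \<le> V"
  proof -
    have "(\<Sum>E\<in>W. w E * (X E - mm)\<^sup>2) = (\<Sum>E\<in>W. w E * (X E)\<^sup>2) - 2 * mm * (\<Sum>E\<in>W. w E * X E) + mm\<^sup>2 * (\<Sum>E\<in>W. w E)"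
      by (simp add: power2_diff algebra_simps sum.distrib sum_subtractf sum_distrib_left sum_distrib_right)
    also have "\<dots> = (\<Sum>E\<in>W. w E * (X E)\<^sup>2) - mm\<^sup>2" using sX s1 by (simp add: power2_eq_square)
    finally show ?thesis using sX2 by simp
  qed
  have "measure_pmf.prob M {E. real (card {a\<in>Conf. ev a E}) < mm/2}
        = (\<Sum>E\<in>W. w E * (if X E < mm/2 then 1 else 0))"
    by (simp add: pw Xc)
  also have "\<dots> \<le> (\<Sum>E\<in>W. w E * ((X E - mm)\<^sup>2 * (4 / mm\<^sup>2)))"
  proof (intro sum_mono mult_left_mono w0)
    fix E
    show "(if X E < mm/2 then 1 else 0) \<le> (X E - mm)\<^sup>2 * (4 / mm\<^sup>2)"
    proof (cases "X E < mm/2")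
      case True
      then have "mm/2 \<le> mm - X E" by simp
      then have "(mm/2)\<^sup>2 \<le> (mm - X E)\<^sup>2" using mupos by (intro power_mono) auto
      then have "mm\<^sup>2 \<le> 4 * (X E - mm)\<^sup>2" by (simp add: power2_eq_square algebra_simps)
      then show ?thesis using True mupos by (simp add: field_simps)
    qed simp
  qed
  also have "\<dots> = (4 / mm\<^sup>2) * (\<Sum>E\<in>W. w E * (X E - mm)\<^sup>2)"
    by (simp add: sum_distrib_left algebra_simps)
  also have "\<dots> \<le> (4 / mm\<^sup>2) * V"
    using var by (intro mult_left_mono) auto
  finally show ?thesis by simp
qed



definition Conf :: "nat \<Rightarrow> nat \<Rightarrow> nat \<Rightarrow> (nat set \<times> nat set) set" where
  "Conf n j k = {(K,C). K \<subseteq> {1..n} \<and> card K = k+1 \<and> C \<subseteq> K \<and> card C = j \<and> (k = j \<longrightarrow> C = K - {Max K})}"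

definition Nb :: "nat \<Rightarrow> nat \<Rightarrow> nat set \<Rightarrow> nat set \<Rightarrow> nat set set" where
  "Nb n d K C = {S \<in> cand_edges n d. (\<exists>x\<in>K-C. insert x C \<subseteq> S) \<and> \<not> S \<subseteq> K}"

definition evc :: "nat \<Rightarrow> nat \<Rightarrow> nat set \<times> nat set \<Rightarrow> nat set set \<Rightarrow> bool" where
  "evc n d a E \<longleftrightarrow> fst a \<in> E \<and> E \<inter> Nb n d (fst a) (snd a) = {}"

lemma finite_Conf: "finite (Conf n j k)"
  by (rule finite_subset[of _ "Pow {1..n} \<times> Pow {1..n}"]) (auto simp: Conf_def)

lemma Conf_cand:
  assumes "(K,C) \<in> Conf n j k" "1 \<le> j" "j \<le> k" "k \<le> d"
  shows "K \<in> cand_edges n d"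
  using assms by (auto simp: Conf_def cand_edges_def)

lemma Nb_cand: "Nb n d K C \<subseteq> cand_edges n d"
  by (auto simp: Nb_def)

lemma K_notin_Nb: "K \<notin> Nb n d K C"
  by (auto simp: Nb_def)

lemma finite_Nb: "finite (Nb n d K C)"
  using finite_subset[OF Nb_cand finite_cand] .

lemma cand_sub: "S \<in> cand_edges n d \<Longrightarrow> S \<subseteq> {1..n}"
  by (auto simp: cand_edges_def)

lemma copy_of_ev:
  assumes j: "1 \<le> j" "j \<le> k" "k \<le> d" and KC: "(K,C) \<in> Conf n j k"
    and E: "E \<subseteq> cand_edges n d" and ev: "evc n d (K,C) E"
  shows "(K, if k = j then first_vertices j K else C) \<in> copies j k (complex_of n E)"
proof -
  have KE: "K \<in> E" and dis: "E \<inter> Nb n d K C = {}" using ev by (auto simp: evc_def)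
  have cK: "card K = k+1" and CK: "C \<subseteq> K" and cC: "card C = j"
    using KC by (auto simp: Conf_def)
  have fK: "finite K" using cK card.infinite by fastforce
  have Kne: "K \<noteq> {}" using cK by auto
  have KX: "K \<in> complex_of n E" using KE Kne by (auto simp: complex_of_def)
  have key: "L \<subseteq> K" if x: "x \<in> K - C" and L: "L \<in> complex_of n E" and sub: "insert x C \<subseteq> L" for x L
  proof -
    have "card (insert x C) = j + 1"
      using x cC fK CK by (subst card_insert_disjoint) (auto intro: finite_subset)
    then have c2: "2 \<le> card (insert x C)" using j by simp
    show ?thesis
    proof (cases "\<exists>v. L = {v}")
      case True
      then obtain v where "L = {v}" by auto
      with sub have "insert x C \<subseteq> {v}" by simp
      then have "card (insert x C) \<le> card {v}"
        by (intro card_mono) auto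
      with c2 show ?thesis by simp
    next
      case False
      with L obtain S where S: "S \<in> E" "L \<subseteq> S" by (auto simp: complex_of_def)
      have "S \<subseteq> K"
      proof (rule ccontr)
        assume "\<not> S \<subseteq> K"
        then have "S \<in> Nb n d K C" using S sub x E by (auto simp: Nb_def)
        with dis S show False by auto
      qed
      with S show ?thesis by auto
    qed
  qed
  show ?thesis
  proof (cases "k = j")
    case True
    then have CK': "C = K - {Max K}" using KC by (auto simp: Conf_def)
    have MK: "Max K \<in> K" using fK Kne by simp
    have "L = K" if "L \<in> complex_of n E" "K \<subseteq> L" for L
    proof -
      have "insert (Max K) C = K" using CK' MK by auto
      then have "L \<subseteq> K" using key[of "Max K" L] that MK CK' by auto
      with that show ?thesis by auto
    qed
    then show ?thesis using True KX cK unfolding copies_def by simp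
  next
    case False
    then have jk: "j < k" using j by simp
    have "\<forall>x\<in>K - C. \<forall>L\<in>complex_of n E. insert x C \<subseteq> L \<longrightarrow> L \<subseteq> K"
      using key by blast
    then show ?thesis using False jk KX cK CK cC unfolding copies_def by simp
  qed
qed

lemma finite_complex: "E \<subseteq> cand_edges n d \<Longrightarrow> complex_of n E \<subseteq> Pow {1..n}"
  by (auto simp: complex_of_def cand_edges_def)

lemma finite_copies:
  assumes "E \<subseteq> cand_edges n d"
  shows "finite (copies j k (complex_of n E))"
proof -
  have "copies j k (complex_of n E) \<subseteq> Pow {1..n} \<times> Pow {1..n}"
    using finite_complex[OF assms] by (auto simp: copies_def first_vertices_def)
  then show ?thesis by (rule finite_subset) auto
qed

lemma card_copies_ge:
  assumes j: "1 \<le> j" "j \<le> k" "k \<le> d" and E: "E \<subseteq> cand_edges n d"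
  shows "card {a \<in> Conf n j k. evc n d a E} \<le> card (copies j k (complex_of n E))"
proof -
  define g where "g a = (fst a, if k = j then first_vertices j (fst a) else snd a)" for a :: "nat set \<times> nat set"
  have inj: "inj_on g {a \<in> Conf n j k. evc n d a E}"
  proof (rule inj_onI)
    fix a b assume a: "a \<in> {a \<in> Conf n j k. evc n d a E}" and b: "b \<in> {a \<in> Conf n j k. evc n d a E}"
      and gab: "g a = g b"
    obtain K C K' C' where ab: "a = (K,C)" "b = (K',C')" by force
    have KK: "K = K'" using gab ab by (simp add: g_def)
    show "a = b"
    proof (cases "k = j")
      case True
      then have "C = K - {Max K}" "C' = K' - {Max K'}" using a b ab by (auto simp: Conf_def)
      then show ?thesis using ab KK by simp
    next
      case False
      then show ?thesis using gab ab by (simp add: g_def)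
    qed
  qed
  have sub: "g ` {a \<in> Conf n j k. evc n d a E} \<subseteq> copies j k (complex_of n E)"
    using copy_of_ev[OF j _ E] by (auto simp: g_def)
  show ?thesis
    using card_inj_on_le[OF inj sub finite_copies[OF E]] .
qed

lemma card_Conf_ge:
  assumes "j \<le> k"
  shows "n choose (k+1) \<le> card (Conf n j k)"
proof -
  have "{K. K \<subseteq> {1..n} \<and> card K = k+1} \<subseteq> fst ` Conf n j k"
  proof
    fix K assume K: "K \<in> {K. K \<subseteq> {1..n} \<and> card K = k+1}"
    then have fK: "finite K" and cK: "card K = k+1" and Kn: "K \<subseteq> {1..n}"
      by (auto intro: finite_subset)
    show "K \<in> fst ` Conf n j k"
    proof (cases "k = j")
      case True
      have "K \<noteq> {}" using cK by auto
      then have "Max K \<in> K" using fK by simp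
      then have "card (K - {Max K}) = j" using cK True fK by simp
      then have "(K, K - {Max K}) \<in> Conf n j k" using True Kn cK by (auto simp: Conf_def)
      then show ?thesis by force
    next
      case False
      obtain C where "C \<subseteq> K" "card C = j" using obtain_subset_with_card_n[of j K] cK assms by auto
      then have "(K, C) \<in> Conf n j k" using False Kn cK by (auto simp: Conf_def)
      then show ?thesis by force
    qed
  qed
  then have "card {K. K \<subseteq> {1..n} \<and> card K = k+1} \<le> card (fst ` Conf n j k)"
    using finite_Conf by (intro card_mono) auto
  also have "\<dots> \<le> card (Conf n j k)" using finite_Conf by (rule card_image_le)
  finally show ?thesis by (simp add: n_subsets)
qed

lemma card_sameK:
  assumes "a \<in> Conf n j k"
  shows "card {b \<in> Conf n j k. fst b = fst a} \<le> 2^(k+1)"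
proof -
  obtain K C where a: "a = (K,C)" by force
  have cK: "card K = k+1" using assms a by (auto simp: Conf_def)
  have fK: "finite K" using cK card.infinite by fastforce
  have "{b \<in> Conf n j k. fst b = fst a} \<subseteq> {K} \<times> Pow K" using a by (auto simp: Conf_def)
  then have "card {b \<in> Conf n j k. fst b = fst a} \<le> card ({K} \<times> Pow K)"
    using fK by (intro card_mono) auto
  also have "\<dots> = 2^(k+1)" using fK cK by (simp add: card_cartesian_product card_Pow)
  finally show ?thesis .
qed



lemma cand_finite: "S \<in> cand_edges n d \<Longrightarrow> finite S"
  by (rule finite_subset[OF cand_sub finite_atLeastAtMost])

lemma card_supersets:
  assumes "finite T" "card T = t"
  shows "card {S \<in> cand_edges n d. T \<subseteq> S \<and> card S = m} \<le> n choose (m - t)"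
proof -
  let ?A = "{S \<in> cand_edges n d. T \<subseteq> S \<and> card S = m}"
  have inj: "inj_on (\<lambda>S. S - T) ?A"
  proof (rule inj_onI)
    fix x y assume x: "x \<in> ?A" and y: "y \<in> ?A" and e: "x - T = y - T"
    have "x = T \<union> (x - T)" using x by auto
    also have "\<dots> = T \<union> (y - T)" using e by simp
    also have "\<dots> = y" using y by auto
    finally show "x = y" .
  qed
  have sub: "(\<lambda>S. S - T) ` ?A \<subseteq> {B. B \<subseteq> {1..n} \<and> card B = m - t}"
  proof
    fix B assume "B \<in> (\<lambda>S. S - T) ` ?A"
    then obtain S where S: "S \<in> ?A" "B = S - T" by auto
    have fS: "finite S" using S by (auto intro: cand_finite)
    have "card B = m - t" using S assms fS by (simp add: card_Diff_subset)
    then show "B \<in> {B. B \<subseteq> {1..n} \<and> card B = m - t}" using S by (auto simp: cand_edges_def)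
  qed
  have "card ?A \<le> card {B. B \<subseteq> {1..n} \<and> card B = m - t}"
    by (rule card_inj_on_le[OF inj sub]) auto
  also have "\<dots> = n choose (m - t)" by (simp add: n_subsets)
  finally show ?thesis .
qed

lemma sum_supersets:
  fixes g :: "nat \<Rightarrow> real"
  assumes "finite T" "card T = t" "\<And>m. g m \<ge> 0"
  shows "(\<Sum>S\<in>{S \<in> cand_edges n d. T \<subseteq> S \<and> a \<le> card S}. g (card S))
           \<le> (\<Sum>m\<in>{a..d+1}. real (n choose (m - t)) * g m)"
proof -
  let ?A = "{S \<in> cand_edges n d. T \<subseteq> S \<and> a \<le> card S}"
  have fA: "finite ?A" using finite_cand by (rule finite_subset[rotated]) auto
  have im: "card ` ?A \<subseteq> {a..d+1}" by (auto simp: cand_edges_def)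
  have "(\<Sum>S\<in>?A. g (card S)) = (\<Sum>m\<in>{a..d+1}. \<Sum>S\<in>{S. S \<in> ?A \<and> card S = m}. g (card S))"
    by (rule sum.group[OF fA _ im, symmetric]) simp
  also have "\<dots> = (\<Sum>m\<in>{a..d+1}. real (card {S. S \<in> ?A \<and> card S = m}) * g m)"
  proof (intro sum.cong refl)
    fix m
    have "(\<Sum>S\<in>{S. S \<in> ?A \<and> card S = m}. g (card S)) = (\<Sum>S\<in>{S. S \<in> ?A \<and> card S = m}. g m)"
      by (rule sum.cong) auto
    then show "(\<Sum>S\<in>{S. S \<in> ?A \<and> card S = m}. g (card S)) = real (card {S. S \<in> ?A \<and> card S = m}) * g m"
      by simp
  qed
  also have "\<dots> \<le> (\<Sum>m\<in>{a..d+1}. real (n choose (m - t)) * g m)"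
  proof (rule sum_mono)
    fix m assume "m \<in> {a..d+1}"
    have "{S. S \<in> ?A \<and> card S = m} \<subseteq> {S \<in> cand_edges n d. T \<subseteq> S \<and> card S = m}" by auto
    then have "card {S. S \<in> ?A \<and> card S = m} \<le> card {S \<in> cand_edges n d. T \<subseteq> S \<and> card S = m}"
      by (intro card_mono finite_subset[OF _ finite_cand]) auto
    also have "\<dots> \<le> n choose (m - t)" by (rule card_supersets[OF assms(1,2)])
    finally have "real (card {S. S \<in> ?A \<and> card S = m}) \<le> real (n choose (m - t))" by simp
    then show "real (card {S. S \<in> ?A \<and> card S = m}) * g m \<le> real (n choose (m - t)) * g m"
      using assms(3)[of m] by (rule mult_right_mono)
  qed
  finally show ?thesis .
qed



lemma sum_cover:
  fixes f :: "'a \<Rightarrow> real"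
  assumes "finite I" "\<And>i. i \<in> I \<Longrightarrow> finite (B i)" "A \<subseteq> (\<Union>i\<in>I. B i)" "\<And>x. f x \<ge> 0"
  shows "sum f A \<le> (\<Sum>i\<in>I. sum f (B i))"
  using assms(1-3)
proof (induction I arbitrary: A rule: finite_induct)
  case empty
  then show ?case by simp
next
  case (insert i I)
  have fA: "finite A"
    by (rule finite_subset[OF insert.prems(2)]) (use insert.prems(1) insert.hyps(1) in auto)
  have "sum f A = sum f (A \<inter> B i) + sum f (A - B i)"
    using fA by (rule sum.Int_Diff)
  also have "sum f (A \<inter> B i) \<le> sum f (B i)"
    using insert.prems(1) assms(4) by (intro sum_mono2) auto
  also have "sum f (A - B i) \<le> (\<Sum>i\<in>I. sum f (B i))"
    using insert.prems by (intro insert.IH) auto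
  finally show ?case using insert.hyps by simp
qed

lemma exp_le_one_minus:
  fixes x eta :: real
  assumes "0 \<le> x" "x \<le> eta" "eta < 1"
  shows "exp (- (x / (1 - eta))) \<le> 1 - x"
proof -
  have x1: "x < 1" using assms by simp
  have "1 + x / (1 - x) \<le> exp (x / (1 - x))" by (rule exp_ge_add_one_self)
  moreover have "1 + x / (1 - x) = 1 / (1 - x)" using x1 by (simp add: field_simps)
  ultimately have "1 / (1 - x) \<le> exp (x / (1 - x))" by simp
  then have "exp (- (x / (1 - x))) \<le> 1 - x"
    using x1 by (simp add: exp_minus field_simps)
  moreover have "exp (- (x / (1 - eta))) \<le> exp (- (x / (1 - x)))"
    using assms x1 by (simp add: frac_le)
  ultimately show ?thesis by linarith
qed

lemma prod_one_minus_ge: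
  fixes r :: "'a \<Rightarrow> real"
  assumes "finite N" "\<And>S. S \<in> N \<Longrightarrow> 0 \<le> r S \<and> r S \<le> eta" "eta < 1"
  shows "exp (- (sum r N) / (1 - eta)) \<le> (\<Prod>S\<in>N. 1 - r S)"
proof -
  have "exp (- (sum r N) / (1 - eta)) = exp (\<Sum>S\<in>N. - r S / (1 - eta))"
    by (simp add: sum_negf sum_divide_distrib)
  also have "\<dots> = (\<Prod>S\<in>N. exp (- r S / (1 - eta)))" using assms(1) by (rule exp_sum)
  also have "\<dots> \<le> (\<Prod>S\<in>N. 1 - r S)"
  proof (rule prod_mono)
    fix S assume "S \<in> N"
    then have "0 \<le> r S" "r S \<le> eta" using assms(2) by auto
    then show "0 \<le> exp (- r S / (1 - eta)) \<and> exp (- r S / (1 - eta)) \<le> 1 - r S"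
      using exp_le_one_minus[of "r S" eta] assms(3) by simp
  qed
  finally show ?thesis .
qed



lemma Conf_facts:
  assumes "(K,C) \<in> Conf n j k"
  shows "K \<subseteq> {1..n}" "card K = k+1" "C \<subseteq> K" "card C = j" "finite K" "finite C"
proof -
  show "K \<subseteq> {1..n}" "card K = k+1" "C \<subseteq> K" "card C = j" using assms by (auto simp: Conf_def)
  then show "finite K" "finite C" using finite_subset[of K "{1..n}"] finite_subset[of C K] by auto
qed

lemma card_insert_C:
  assumes "(K,C) \<in> Conf n j k" "x \<in> K - C"
  shows "card (insert x C) = j + 1"
  using Conf_facts[OF assms(1)] assms(2) by simp

lemma Nb_card:
  assumes KC: "(K,C) \<in> Conf n j k" and S: "S \<in> Nb n d K C"
  shows "j + 2 \<le> card S"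
proof -
  obtain x where x: "x \<in> K - C" "insert x C \<subseteq> S" and nS: "\<not> S \<subseteq> K" "S \<in> cand_edges n d"
    using S by (auto simp: Nb_def)
  have fS: "finite S" using nS(2) by (rule cand_finite)
  have "insert x C \<subseteq> K" using x Conf_facts[OF KC] by auto
  then have "insert x C \<subset> S" using x nS by auto
  with fS have "card (insert x C) < card S" by (intro psubset_card_mono)
  then show ?thesis using card_insert_C[OF KC x(1)] by simp
qed

lemma sum_Nb:
  assumes KC: "(K,C) \<in> Conf n j k"
  shows "(\<Sum>S\<in>Nb n d K C. rho q (card S))
          \<le> real (k + 1 - j) * (\<Sum>m\<in>{j+2..d+1}. real (n choose (m - (j+1))) * rho q m)"
proof -
  let ?B = "\<lambda>x. {S \<in> cand_edges n d. insert x C \<subseteq> S \<and> j + 2 \<le> card S}"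
  have cov: "Nb n d K C \<subseteq> (\<Union>x\<in>K - C. ?B x)"
  proof
    fix S assume S: "S \<in> Nb n d K C"
    then obtain x where "x \<in> K - C" "insert x C \<subseteq> S" "S \<in> cand_edges n d" by (auto simp: Nb_def)
    then show "S \<in> (\<Union>x\<in>K - C. ?B x)" using Nb_card[OF KC S] by auto
  qed
  have "(\<Sum>S\<in>Nb n d K C. rho q (card S)) \<le> (\<Sum>x\<in>K - C. \<Sum>S\<in>?B x. rho q (card S))"
    using Conf_facts[OF KC] cov
    by (intro sum_cover) (auto simp: rho_nonneg intro: finite_subset[OF _ finite_cand])
  also have "\<dots> \<le> (\<Sum>x\<in>K - C. (\<Sum>m\<in>{j+2..d+1}. real (n choose (m - (j+1))) * rho q m))"
  proof (rule sum_mono)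
    fix x assume x: "x \<in> K - C"
    show "(\<Sum>S\<in>?B x. rho q (card S)) \<le> (\<Sum>m\<in>{j+2..d+1}. real (n choose (m - (j+1))) * rho q m)"
      using Conf_facts[OF KC] card_insert_C[OF KC x]
      by (intro sum_supersets) (auto simp: rho_nonneg)
  qed
  also have "\<dots> = real (card (K - C)) * (\<Sum>m\<in>{j+2..d+1}. real (n choose (m - (j+1))) * rho q m)"
    by simp
  also have "card (K - C) = k + 1 - j" using Conf_facts[OF KC] by (simp add: card_Diff_subset)
  finally show ?thesis .
qed

lemma evc_set: "{E. evc n d a E} = {E. {fst a} \<subseteq> E \<and> E \<inter> Nb n d (fst a) (snd a) = {}}"
  by (auto simp: evc_def)

lemma pr_eq:
  assumes KC: "(K,C) \<in> Conf n j k" and j: "1 \<le> j" "j \<le> k" "k \<le> d"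
  shows "measure_pmf.prob (random_edges n d q) {E. evc n d (K,C) E}
         = rho q (k+1) * (\<Prod>S\<in>Nb n d K C. 1 - rho q (card S))"
proof -
  have "measure_pmf.prob (random_edges n d q) {E. evc n d (K,C) E}
        = (\<Prod>S\<in>{K}. rho q (card S)) * (\<Prod>S\<in>Nb n d K C. 1 - rho q (card S))"
    unfolding evc_set fst_conv snd_conv using Conf_cand[OF KC j] Nb_cand K_notin_Nb
    by (intro prob_config) auto
  then show ?thesis using Conf_facts[OF KC] by simp
qed

lemma pr_lower:
  assumes KC: "(K,C) \<in> Conf n j k" and j: "1 \<le> j" "j \<le> k" "k \<le> d"
    and et: "et < 1" "\<And>m. m \<in> {j+2..d+1} \<Longrightarrow> rho q m \<le> et"
  shows "rho q (k+1) * exp (- (real (k + 1 - j) * (\<Sum>m\<in>{j+2..d+1}. real (n choose (m - (j+1))) * rho q m)) / (1 - et))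
         \<le> measure_pmf.prob (random_edges n d q) {E. evc n d (K,C) E}"
proof -
  let ?U = "real (k + 1 - j) * (\<Sum>m\<in>{j+2..d+1}. real (n choose (m - (j+1))) * rho q m)"
  have card_le: "card S \<le> d + 1" if "S \<in> Nb n d K C" for S
    using that by (auto simp: Nb_def cand_edges_def)
  have "exp (- ?U / (1 - et)) \<le> exp (- (\<Sum>S\<in>Nb n d K C. rho q (card S)) / (1 - et))"
    using sum_Nb[OF KC, where d=d and q=q] et by (simp add: divide_right_mono)
  also have "\<dots> \<le> (\<Prod>S\<in>Nb n d K C. 1 - rho q (card S))"
    using et Nb_card[OF KC] card_le
    by (intro prod_one_minus_ge finite_Nb) (auto simp: rho_nonneg)
  finally have "rho q (k+1) * exp (- ?U / (1 - et)) \<le> rho q (k+1) * (\<Prod>S\<in>Nb n d K C. 1 - rho q (card S))"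
    by (intro mult_left_mono) (auto simp: rho_nonneg)
  then show ?thesis using pr_eq[OF KC j] by simp
qed



lemma pair_T_exists:
  assumes a: "(K1,C1) \<in> Conf n j k" and b: "(K2,C2) \<in> Conf n j k" and ne: "K1 \<noteq> K2"
    and j: "1 \<le> j" "j \<le> k" "k \<le> d"
    and cons: "K2 \<notin> Nb n d K1 C1"
    and x: "x \<in> K1 - C1" and y: "y \<in> K2 - C2"
  shows "\<exists>T. T \<subseteq> insert x C1 \<union> insert y C2 \<and> card T = j + 2 \<and> finite T"
proof -
  note fa = Conf_facts[OF a] and fb = Conf_facts[OF b]
  have c1: "card (insert x C1) = j + 1" using card_insert_C[OF a x] .
  have c2: "card (insert y C2) = j + 1" using card_insert_C[OF b y] .
  have K2c: "K2 \<in> cand_edges n d" using Conf_cand[OF b j] .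
  have nsub: "\<not> K2 \<subseteq> K1"
  proof
    assume "K2 \<subseteq> K1"
    then have "K2 = K1" using fa fb by (intro card_subset_eq) auto
    with ne show False by simp
  qed
  have neq: "insert x C1 \<noteq> insert y C2"
  proof
    assume e: "insert x C1 = insert y C2"
    have "insert y C2 \<subseteq> K2" using y fb by auto
    then have "insert x C1 \<subseteq> K2" using e by simp
    then have "K2 \<in> Nb n d K1 C1" unfolding Nb_def using x nsub K2c by blast
    with cons show False by simp
  qed
  have "\<not> insert y C2 \<subseteq> insert x C1"
  proof
    assume "insert y C2 \<subseteq> insert x C1"
    then have "insert y C2 = insert x C1" using c1 c2 fa by (intro card_subset_eq) auto
    with neq show False by simp
  qed
  then have ps: "insert x C1 \<subset> insert x C1 \<union> insert y C2" by auto
  have fU: "finite (insert x C1 \<union> insert y C2)" using fa fb by simp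
  have "card (insert x C1) < card (insert x C1 \<union> insert y C2)"
    using fU ps by (intro psubset_card_mono)
  then have "j + 2 \<le> card (insert x C1 \<union> insert y C2)" using c1 by simp
  then obtain T where "T \<subseteq> insert x C1 \<union> insert y C2" "card T = j + 2"
    by (rule obtain_subset_with_card_n)
  moreover then have "finite T" using fU finite_subset by auto
  ultimately show ?thesis by blast
qed

lemma pair_bound:
  assumes a: "(K1,C1) \<in> Conf n j k" and b: "(K2,C2) \<in> Conf n j k" and ne: "K1 \<noteq> K2"
    and j: "1 \<le> j" "j \<le> k" "k \<le> d"
    and half: "\<And>m. m \<in> {j+2..d+1} \<Longrightarrow> rho q m \<le> 1/2"
    and sb: "real ((k+1)^2) * (\<Sum>m\<in>{j+2..d+1}. real (n choose (m - (j+2))) * rho q m) \<le> dl / 2"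
  shows "measure_pmf.prob (random_edges n d q) {E. evc n d (K1,C1) E \<and> evc n d (K2,C2) E}
         \<le> exp dl * (measure_pmf.prob (random_edges n d q) {E. evc n d (K1,C1) E}
                    * measure_pmf.prob (random_edges n d q) {E. evc n d (K2,C2) E})"
proof -
  let ?M = "random_edges n d q"
  let ?N1 = "Nb n d K1 C1" and ?N2 = "Nb n d K2 C2"
  let ?r = "\<lambda>S. rho q (card S)"
  have fN1: "finite ?N1" and fN2: "finite ?N2" by (rule finite_Nb)+
  have ev2: "{E. evc n d (K1,C1) E \<and> evc n d (K2,C2) E} = {E. {K1,K2} \<subseteq> E \<and> E \<inter> (?N1 \<union> ?N2) = {}}"
    by (auto simp: evc_def)
  have pos: "0 \<le> exp dl * (measure_pmf.prob ?M {E. evc n d (K1,C1) E} * measure_pmf.prob ?M {E. evc n d (K2,C2) E})"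
    by simp
  show ?thesis
  proof (cases "{K1,K2} \<inter> (?N1 \<union> ?N2) = {}")
    case False
    have e: "{E. evc n d (K1,C1) E \<and> evc n d (K2,C2) E} = {}" unfolding ev2 using False by blast
    show ?thesis unfolding e using pos by simp
  next
    case True
    have cons: "K2 \<notin> ?N1" using True by auto
    have Kc: "K1 \<in> cand_edges n d" "K2 \<in> cand_edges n d" using Conf_cand[OF a j] Conf_cand[OF b j] .
    have ck: "card K1 = k+1" "card K2 = k+1" using Conf_facts[OF a] Conf_facts[OF b] by auto
    have p2: "measure_pmf.prob ?M {E. evc n d (K1,C1) E \<and> evc n d (K2,C2) E}
              = (\<Prod>S\<in>{K1,K2}. ?r S) * (\<Prod>S\<in>?N1 \<union> ?N2. 1 - ?r S)"
      unfolding ev2 using Kc Nb_cand True by (intro prob_config) auto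
    also have "(\<Prod>S\<in>{K1,K2}. ?r S) = rho q (k+1) * rho q (k+1)" using ne ck by simp
    finally have p2': "measure_pmf.prob ?M {E. evc n d (K1,C1) E \<and> evc n d (K2,C2) E}
              = rho q (k+1) * rho q (k+1) * (\<Prod>S\<in>?N1 \<union> ?N2. 1 - ?r S)" .
    let ?I = "(K1 - C1) \<times> (K2 - C2)"
    have "\<forall>p\<in>?I. \<exists>T. T \<subseteq> insert (fst p) C1 \<union> insert (snd p) C2 \<and> card T = j + 2 \<and> finite T"
      using pair_T_exists[OF a b ne j cons] by auto
    then obtain Tf where Tf: "\<And>p. p \<in> ?I \<Longrightarrow> Tf p \<subseteq> insert (fst p) C1 \<union> insert (snd p) C2 \<and> card (Tf p) = j + 2 \<and> finite (Tf p)"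
      by metis
    let ?B = "\<lambda>p. {S \<in> cand_edges n d. Tf p \<subseteq> S \<and> j + 2 \<le> card S}"
    have cov: "?N1 \<inter> ?N2 \<subseteq> (\<Union>p\<in>?I. ?B p)"
    proof
      fix S assume S: "S \<in> ?N1 \<inter> ?N2"
      then obtain x y where xy: "x \<in> K1 - C1" "insert x C1 \<subseteq> S" "y \<in> K2 - C2" "insert y C2 \<subseteq> S"
        and Sc: "S \<in> cand_edges n d" by (auto simp: Nb_def)
      have pI: "(x,y) \<in> ?I" using xy by auto
      have "Tf (x,y) \<subseteq> S" using Tf[OF pI] xy by auto
      moreover have "j + 2 \<le> card S" using S Nb_card[OF a] by auto
      ultimately show "S \<in> (\<Union>p\<in>?I. ?B p)" using pI Sc by blast
    qed
    have fI: "finite ?I" using Conf_facts[OF a] Conf_facts[OF b] by simp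
    have "(\<Sum>S\<in>?N1 \<inter> ?N2. ?r S) \<le> (\<Sum>p\<in>?I. \<Sum>S\<in>?B p. ?r S)"
      using fI cov by (intro sum_cover) (auto simp: rho_nonneg intro: finite_subset[OF _ finite_cand])
    also have "\<dots> \<le> (\<Sum>p\<in>?I. (\<Sum>m\<in>{j+2..d+1}. real (n choose (m - (j+2))) * rho q m))"
    proof (rule sum_mono)
      fix p assume p: "p \<in> ?I"
      show "(\<Sum>S\<in>?B p. ?r S) \<le> (\<Sum>m\<in>{j+2..d+1}. real (n choose (m - (j+2))) * rho q m)"
        using Tf[OF p] by (intro sum_supersets) (auto simp: rho_nonneg)
    qed
    also have "\<dots> = real (card ?I) * (\<Sum>m\<in>{j+2..d+1}. real (n choose (m - (j+2))) * rho q m)"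
      by simp
    also have "\<dots> \<le> real ((k+1)^2) * (\<Sum>m\<in>{j+2..d+1}. real (n choose (m - (j+2))) * rho q m)"
    proof (rule mult_right_mono)
      have "card ?I = card (K1 - C1) * card (K2 - C2)" by (simp add: card_cartesian_product)
      also have "\<dots> \<le> card K1 * card K2"
        using Conf_facts[OF a] Conf_facts[OF b] by (intro mult_mono card_mono) auto
      also have "\<dots> = (k+1)^2" using ck by (simp add: power2_eq_square)
      finally show "real (card ?I) \<le> real ((k+1)^2)" by linarith
      show "0 \<le> (\<Sum>m\<in>{j+2..d+1}. real (n choose (m - (j+2))) * rho q m)"
        by (intro sum_nonneg mult_nonneg_nonneg) (auto simp: rho_nonneg)
    qed
    also have "\<dots> \<le> dl / 2" by (rule sb)
    finally have sI: "(\<Sum>S\<in>?N1 \<inter> ?N2. ?r S) \<le> dl / 2" .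
    have "exp (- (\<Sum>S\<in>?N1 \<inter> ?N2. ?r S) / (1 - 1/2)) \<le> (\<Prod>S\<in>?N1 \<inter> ?N2. 1 - ?r S)"
      using fN1 half Nb_card[OF a]
      by (intro prod_one_minus_ge) (auto simp: rho_nonneg Nb_def cand_edges_def)
    moreover have "exp (- dl) \<le> exp (- (\<Sum>S\<in>?N1 \<inter> ?N2. ?r S) / (1 - 1/2))"
      using sI by simp
    ultimately have pI: "exp (- dl) \<le> (\<Prod>S\<in>?N1 \<inter> ?N2. 1 - ?r S)" by linarith
    have un: "(\<Prod>S\<in>?N1 \<union> ?N2. 1 - ?r S) * (\<Prod>S\<in>?N1 \<inter> ?N2. 1 - ?r S)
              = (\<Prod>S\<in>?N1. 1 - ?r S) * (\<Prod>S\<in>?N2. 1 - ?r S)"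
      using fN1 fN2 by (rule prod.union_inter)
    have nnU: "0 \<le> (\<Prod>S\<in>?N1 \<union> ?N2. 1 - ?r S)" by (intro prod_nonneg) (auto simp: rho_le1)
    have "(\<Prod>S\<in>?N1 \<union> ?N2. 1 - ?r S) = exp dl * ((\<Prod>S\<in>?N1 \<union> ?N2. 1 - ?r S) * exp (- dl))"
      by (simp add: exp_minus field_simps)
    also have "\<dots> \<le> exp dl * ((\<Prod>S\<in>?N1 \<union> ?N2. 1 - ?r S) * (\<Prod>S\<in>?N1 \<inter> ?N2. 1 - ?r S))"
      using pI nnU by (intro mult_left_mono) auto
    also have "\<dots> = exp dl * ((\<Prod>S\<in>?N1. 1 - ?r S) * (\<Prod>S\<in>?N2. 1 - ?r S))" using un by simp
    finally have "rho q (k+1) * rho q (k+1) * (\<Prod>S\<in>?N1 \<union> ?N2. 1 - ?r S)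
          \<le> rho q (k+1) * rho q (k+1) * (exp dl * ((\<Prod>S\<in>?N1. 1 - ?r S) * (\<Prod>S\<in>?N2. 1 - ?r S)))"
      by (intro mult_left_mono) (auto simp: rho_nonneg)
    then show ?thesis using p2' pr_eq[OF a j] pr_eq[OF b j] by (simp add: algebra_simps)
  qed
qed



lemma set_pmf_random_edges: "set_pmf (random_edges n d q) \<subseteq> Pow (cand_edges n d)"
  by (auto simp: random_edges_def)

lemma var_bound:
  assumes j: "1 \<le> j" "j \<le> k" "k \<le> d"
    and half: "\<And>m. m \<in> {j+2..d+1} \<Longrightarrow> rho q m \<le> 1/2"
    and sb: "real ((k+1)^2) * (\<Sum>m\<in>{j+2..d+1}. real (n choose (m - (j+2))) * rho q m) \<le> dl / 2"
    and mu0: "mu0 = (\<Sum>a\<in>Conf n j k. measure_pmf.prob (random_edges n d q) {E. evc n d a E})"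
  shows "(\<Sum>a\<in>Conf n j k. \<Sum>b\<in>Conf n j k. measure_pmf.prob (random_edges n d q) {E. evc n d a E \<and> evc n d b E})
         \<le> 2^(k+1) * mu0 + exp dl * mu0\<^sup>2"
proof -
  let ?M = "random_edges n d q"
  let ?p = "\<lambda>a. measure_pmf.prob ?M {E. evc n d a E}"
  let ?p2 = "\<lambda>a b. measure_pmf.prob ?M {E. evc n d a E \<and> evc n d b E}"
  have pt: "?p2 a b \<le> (if fst b = fst a then ?p a else 0) + exp dl * (?p a * ?p b)"
    if a: "a \<in> Conf n j k" and b: "b \<in> Conf n j k" for a b
  proof (cases "fst b = fst a")
    case True
    have h1: "?p2 a b \<le> ?p a" by (intro measure_pmf.finite_measure_mono) auto
    have h2: "0 \<le> exp dl * (?p a * ?p b)" by simp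
    have "?p2 a b \<le> ?p a + exp dl * (?p a * ?p b)" using h1 h2 by linarith
    then show ?thesis using True by simp
  next
    case False
    obtain K1 C1 K2 C2 where ab: "a = (K1,C1)" "b = (K2,C2)" by force
    have "?p2 a b \<le> exp dl * (?p a * ?p b)"
      unfolding ab using a b False ab
      by (intro pair_bound[OF _ _ _ j half sb]) auto
    then show ?thesis using False by simp
  qed
  have inner: "(\<Sum>b\<in>Conf n j k. ?p2 a b) \<le> 2^(k+1) * ?p a + exp dl * ?p a * mu0"
    if a: "a \<in> Conf n j k" for a
  proof -
    have "(\<Sum>b\<in>Conf n j k. ?p2 a b) \<le> (\<Sum>b\<in>Conf n j k. (if fst b = fst a then ?p a else 0) + exp dl * (?p a * ?p b))"
      using pt[OF a] by (intro sum_mono) auto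
    also have "\<dots> = (\<Sum>b\<in>Conf n j k. (if fst b = fst a then ?p a else 0)) + exp dl * ?p a * mu0"
      by (simp add: sum.distrib sum_distrib_left mu0 mult.assoc)
    also have "(\<Sum>b\<in>Conf n j k. (if fst b = fst a then ?p a else 0)) = real (card {b\<in>Conf n j k. fst b = fst a}) * ?p a"
      using finite_Conf by (simp add: sum.inter_filter[symmetric])
    also have "\<dots> \<le> 2^(k+1) * ?p a"
    proof (rule mult_right_mono)
      have "real (card {b\<in>Conf n j k. fst b = fst a}) \<le> real ((2::nat)^(k+1))"
        using card_sameK[OF a] by (simp only: of_nat_le_iff)
      then show "real (card {b\<in>Conf n j k. fst b = fst a}) \<le> 2^(k+1)" by simp
    qed simp
    finally show ?thesis by simp
  qed
  have "(\<Sum>a\<in>Conf n j k. \<Sum>b\<in>Conf n j k. ?p2 a b) \<le> (\<Sum>a\<in>Conf n j k. 2^(k+1) * ?p a + exp dl * ?p a * mu0)"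
    using inner by (intro sum_mono) auto
  also have "\<dots> = (\<Sum>a\<in>Conf n j k. 2^(k+1) * ?p a) + (\<Sum>a\<in>Conf n j k. (exp dl * mu0) * ?p a)"
    by (subst sum.distrib[symmetric]) (simp add: mult_ac)
  also have "\<dots> = 2^(k+1) * (\<Sum>a\<in>Conf n j k. ?p a) + (exp dl * mu0) * (\<Sum>a\<in>Conf n j k. ?p a)"
    by (simp only: sum_distrib_left)
  also have "\<dots> = 2^(k+1) * mu0 + exp dl * mu0\<^sup>2"
    unfolding mu0[symmetric] by (simp add: power2_eq_square)
  finally show ?thesis .
qed

lemma main_fixed_n:
  assumes j: "1 \<le> j" "j \<le> k" "k \<le> d"
    and half: "\<And>m. m \<in> {j+2..d+1} \<Longrightarrow> rho q m \<le> 1/2"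
    and sb: "real ((k+1)^2) * (\<Sum>m\<in>{j+2..d+1}. real (n choose (m - (j+2))) * rho q m) \<le> dl / 2"
    and mu0: "mu0 = (\<Sum>a\<in>Conf n j k. measure_pmf.prob (random_edges n d q) {E. evc n d a E})"
    and mupos: "mu0 > 0" and t: "t \<le> mu0 / 2"
  shows "1 - 4 * (2^(k+1) / mu0 + exp dl - 1)
         \<le> measure_pmf.prob (random_edges n d q) {E. t \<le> real (card (copies j k (complex_of n E)))}"
proof -
  let ?M = "random_edges n d q"
  let ?X = "\<lambda>E. real (card {a\<in>Conf n j k. evc n d a E})"
  define V where "V = 2^(k+1) * mu0 + (exp dl - 1) * mu0\<^sup>2"
  have "(\<Sum>a\<in>Conf n j k. \<Sum>b\<in>Conf n j k. measure_pmf.prob ?M {E. evc n d a E \<and> evc n d b E}) \<le> V + mu0\<^sup>2"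
    using var_bound[OF j half sb mu0] by (simp add: V_def algebra_simps)
  then have sm: "measure_pmf.prob ?M {E. ?X E < mu0/2} \<le> 4 * V / mu0\<^sup>2"
    by (intro second_moment[OF _ set_pmf_random_edges finite_Conf mu0 mupos]) (auto intro: finite_cand)
  have "4 * V / mu0\<^sup>2 = 4 * (2^(k+1) / mu0 + exp dl - 1)"
    using mupos by (simp add: V_def field_simps power2_eq_square)
  with sm have sm': "measure_pmf.prob ?M {E. ?X E < mu0/2} \<le> 4 * (2^(k+1) / mu0 + exp dl - 1)" by simp
  have c1: "measure_pmf.prob ?M (UNIV - {E. ?X E < mu0/2}) = 1 - measure_pmf.prob ?M {E. ?X E < mu0/2}"
    using measure_pmf.prob_compl[of "{E. ?X E < mu0/2}" ?M] by simp
  have c2: "measure_pmf.prob ?M (UNIV - {E. ?X E < mu0/2})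
            = measure_pmf.prob ?M ((UNIV - {E. ?X E < mu0/2}) \<inter> set_pmf ?M)"
    by (simp add: measure_Int_set_pmf)
  have c3: "measure_pmf.prob ?M ((UNIV - {E. ?X E < mu0/2}) \<inter> set_pmf ?M) \<le> measure_pmf.prob ?M {E. t \<le> real (card (copies j k (complex_of n E)))}"
  proof (intro measure_pmf.finite_measure_mono subsetI)
    fix E assume E: "E \<in> (UNIV - {E. ?X E < mu0/2}) \<inter> set_pmf ?M"
    then have Ec: "E \<subseteq> cand_edges n d" using set_pmf_random_edges by blast
    have "t \<le> ?X E" using E t by auto
    also have "?X E \<le> real (card (copies j k (complex_of n E)))"
      using card_copies_ge[OF j Ec] by simp
    finally show "E \<in> {E. t \<le> real (card (copies j k (complex_of n E)))}" by simp
  qed simp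
  show ?thesis using sm' c1 c2 c3 by linarith
qed



definition hh :: "(nat \<Rightarrow> real) \<Rightarrow> (nat \<Rightarrow> nat \<Rightarrow> real) \<Rightarrow> (nat \<Rightarrow> real) \<Rightarrow> nat \<Rightarrow> nat \<Rightarrow> real" where
  "hh al be ga i n = (al i * ln (real n) + be i n) / real n powr ga i"

lemma pbar_eq:
  assumes "j \<le> i" "n > 0"
  shows "pbar j al be ga i n = hh al be ga i n * fact (i - j) / real n ^ (i - j)"
proof -
  have e: "real i - real j + ga i = real (i - j) + ga i" using assms by simp
  have "real n powr (real i - real j + ga i) = real n powr (real (i - j)) * real n powr ga i"
    unfolding e by (rule powr_add)
  also have "real n powr (real (i - j)) = real n ^ (i - j)" using assms by (intro powr_realpow) simp
  finally have "real n powr (real i - real j + ga i) = real n ^ (i - j) * real n powr ga i" .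
  then show ?thesis by (simp add: pbar_def hh_def field_simps)
qed

lemma adm_i:
  assumes "admissible d j al be ga" "i \<in> {1..d}"
  shows "(al i = 0 \<or> ga i = 0) \<and> al i \<ge> 0 \<and> ga i \<ge> 0
      \<and> (al i = 0 \<longrightarrow>
           be i = (\<lambda>n. 0) \<or>
           ((\<forall>\<^sub>F n in at_top. be i n > 0) \<and>
            (\<forall>\<epsilon>>0. be i \<in> o(\<lambda>n. real n powr \<epsilon>) \<and> be i \<in> \<omega>(\<lambda>n. real n powr (- \<epsilon>)))))
      \<and> (ga i = 0 \<longrightarrow> (\<lambda>n. \<bar>be i n\<bar>) \<in> o(\<lambda>n. ln (real n)))"
  using assms unfolding admissible_def by blast

lemma al_ln_powr:
  assumes "al i = 0 \<or> ga i = 0"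
  shows "al i * ln (real n) / real n powr ga i = al i * ln (real n)"
  using assms by (cases "n = 0") auto

lemma be_small:
  assumes adm: "admissible d j al be ga" and i: "i \<in> {1..d}" and e: "e > 0"
  shows "\<forall>\<^sub>F n in at_top. \<bar>be i n / real n powr ga i\<bar> \<le> e * ln (real n)"
proof -
  note A = adm_i[OF adm i]
  have lnbig: "\<forall>\<^sub>F n in at_top. 1 \<le> e * ln (real n)"
    using e by real_asymp
  show ?thesis
  proof (cases "ga i = 0")
    case True
    then have "(\<lambda>n. \<bar>be i n\<bar>) \<in> o(\<lambda>n. ln (real n))" using A by blast
    then have "\<forall>\<^sub>F n in at_top. norm (\<bar>be i n\<bar>) \<le> e * norm (ln (real n))"
      using e by (rule landau_o.smallD)
    moreover have "\<forall>\<^sub>F n in at_top. (n::nat) \<ge> 1" by (rule eventually_ge_at_top)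
    ultimately show ?thesis
      by eventually_elim (use True in auto)
  next
    case False
    then have al0: "al i = 0" and gpos: "ga i > 0" using A by auto
    then have "be i = (\<lambda>n. 0) \<or> be i \<in> o(\<lambda>n. real n powr ga i)" using A by blast
    then show ?thesis
    proof
      assume b0: "be i = (\<lambda>n. 0)"
      from lnbig show ?thesis by eventually_elim (simp add: b0)
    next
      assume "be i \<in> o(\<lambda>n. real n powr ga i)"
      then have "\<forall>\<^sub>F n in at_top. norm (be i n) \<le> 1 * norm (real n powr ga i)"
        by (rule landau_o.smallD) simp
      moreover have "\<forall>\<^sub>F n in at_top. (n::nat) \<ge> 1" by (rule eventually_ge_at_top)
      ultimately show ?thesis using lnbig
      proof eventually_elim
        case (elim n)
        then have "\<bar>be i n\<bar> \<le> real n powr ga i" by simp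
        moreover have "real n powr ga i > 0" using elim by simp
        ultimately have "\<bar>be i n / real n powr ga i\<bar> \<le> 1" by (simp add: abs_div divide_le_eq_1)
        then show ?case using elim by linarith
      qed
    qed
  qed
qed

lemma hh_nonneg:
  assumes adm: "admissible d j al be ga" and i: "i \<in> {1..d}"
  shows "\<forall>\<^sub>F n in at_top. 0 \<le> hh al be ga i n"
proof -
  note A = adm_i[OF adm i]
  have n1: "\<forall>\<^sub>F n in at_top. (n::nat) \<ge> 1" by (rule eventually_ge_at_top)
  show ?thesis
  proof (cases "al i = 0")
    case False
    then have alp: "al i > 0" using A by auto
    have "\<forall>\<^sub>F n in at_top. \<bar>be i n / real n powr ga i\<bar> \<le> al i * ln (real n)"
      using alp by (intro be_small[OF adm i])
    then show ?thesis using n1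
    proof eventually_elim
      case (elim n)
      have "hh al be ga i n = al i * ln (real n) + be i n / real n powr ga i"
        using al_ln_powr[of al i ga n] A by (simp add: hh_def add_divide_distrib)
      moreover have "- (be i n / real n powr ga i) \<le> al i * ln (real n)"
        using elim(1) by (meson abs_le_D2)
      ultimately show ?case by linarith
    qed
  next
    case True
    then have "be i = (\<lambda>n. 0) \<or> (\<forall>\<^sub>F n in at_top. be i n > 0)" using A by blast
    then show ?thesis
    proof
      assume "be i = (\<lambda>n. 0)"
      then show ?thesis using True by (simp add: hh_def)
    next
      assume "\<forall>\<^sub>F n in at_top. be i n > 0"
      then show ?thesis by eventually_elim (simp add: hh_def True)
    qed
  qed
qed



lemma S_be_small:
  assumes adm: "admissible d j al be ga" and I: "I \<subseteq> {1..d}" "I \<noteq> {}" and e: "e > 0"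
  shows "\<forall>\<^sub>F n in at_top. \<bar>\<Sum>i\<in>I. be i n / real n powr ga i\<bar> \<le> e * ln (real n)"
proof -
  have fI: "finite I" using I finite_subset by auto
  then have cI: "card I > 0" using I by (simp add: card_gt_0_iff)
  have "\<forall>i\<in>I. \<forall>\<^sub>F n in at_top. \<bar>be i n / real n powr ga i\<bar> \<le> (e / card I) * ln (real n)"
  proof
    fix i assume "i \<in> I"
    then have "i \<in> {1..d}" using I by auto
    then show "\<forall>\<^sub>F n in at_top. \<bar>be i n / real n powr ga i\<bar> \<le> (e / card I) * ln (real n)"
      by (rule be_small[OF adm]) (use e cI in simp)
  qed
  then have "\<forall>\<^sub>F n in at_top. \<forall>i\<in>I. \<bar>be i n / real n powr ga i\<bar> \<le> (e / card I) * ln (real n)"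
    using fI by (simp add: eventually_ball_finite_distrib)
  then show ?thesis
  proof eventually_elim
    case (elim n)
    have "\<bar>\<Sum>i\<in>I. be i n / real n powr ga i\<bar> \<le> (\<Sum>i\<in>I. \<bar>be i n / real n powr ga i\<bar>)"
      by (rule sum_abs)
    also have "\<dots> \<le> (\<Sum>i\<in>I. (e / card I) * ln (real n))"
      using elim by (intro sum_mono) auto
    also have "\<dots> = e * ln (real n)" using cI by simp
    finally show ?case .
  qed
qed

lemma sum_hh_eq:
  assumes adm: "admissible d j al be ga" and I: "I \<subseteq> {1..d}"
  shows "(\<Sum>i\<in>I. hh al be ga i n) = (\<Sum>i\<in>I. al i) * ln (real n) + (\<Sum>i\<in>I. be i n / real n powr ga i)"
proof -
  have "(\<Sum>i\<in>I. hh al be ga i n) = (\<Sum>i\<in>I. al i * ln (real n) + be i n / real n powr ga i)"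
  proof (intro sum.cong refl)
    fix i assume "i \<in> I"
    then have "al i = 0 \<or> ga i = 0" using adm_i[OF adm] I by blast
    then show "hh al be ga i n = al i * ln (real n) + be i n / real n powr ga i"
      using al_ln_powr[of al i ga n] by (simp add: hh_def add_divide_distrib)
  qed
  also have "\<dots> = (\<Sum>i\<in>I. al i) * ln (real n) + (\<Sum>i\<in>I. be i n / real n powr ga i)"
    by (simp add: sum.distrib sum_distrib_right)
  finally show ?thesis .
qed

lemma all_hh_nonneg:
  assumes adm: "admissible d j al be ga"
  shows "\<forall>\<^sub>F n in at_top. \<forall>i\<in>{1..d}. 0 \<le> hh al be ga i n"
  using hh_nonneg[OF adm] by (simp add: eventually_ball_finite_distrib)

lemma sum_hh_bounds:
  assumes adm: "admissible d j al be ga" and I: "I \<subseteq> {1..d}" "I \<noteq> {}"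
    and A: "A = (\<Sum>i\<in>I. al i)" "A > 0"
  shows "\<forall>\<^sub>F n in at_top. (A/2) * ln (real n) \<le> (\<Sum>i\<in>I. hh al be ga i n)
                          \<and> (\<Sum>i\<in>I. hh al be ga i n) \<le> (A + 1) * ln (real n)"
proof -
  have "\<forall>\<^sub>F n in at_top. \<bar>\<Sum>i\<in>I. be i n / real n powr ga i\<bar> \<le> min (A/2) 1 * ln (real n)"
    using A by (intro S_be_small[OF adm I]) auto
  moreover have "\<forall>\<^sub>F n in at_top. (n::nat) \<ge> 1" by (rule eventually_ge_at_top)
  ultimately show ?thesis
  proof eventually_elim
    case (elim n)
    have L0: "0 \<le> ln (real n)" using elim by simp
    have "min (A/2) 1 * ln (real n) \<le> (A/2) * ln (real n)"
      using L0 by (intro mult_right_mono) auto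
    moreover have "min (A/2) 1 * ln (real n) \<le> 1 * ln (real n)"
      using L0 by (intro mult_right_mono) auto
    ultimately show ?case using elim sum_hh_eq[OF adm I(1), of n] A(1)
      by (auto simp: abs_le_iff algebra_simps)
  qed
qed

lemma omega_facts:
  fixes w :: "nat \<Rightarrow> real"
  assumes o: "w \<in> o(\<lambda>n. ln (real n))" and lim: "filterlim w at_top at_top"
  shows "\<forall>\<^sub>F n in at_top. 2 \<le> w n" "\<forall>\<^sub>F n in at_top. w n \<le> ln (real n)"
    and "filterlim (\<lambda>n. ln (real n) / w n) at_top at_top"
proof -
  show "\<forall>\<^sub>F n in at_top. 2 \<le> w n" using lim by (simp add: filterlim_at_top)
  have n1: "\<forall>\<^sub>F n in at_top. (n::nat) \<ge> 1" by (rule eventually_ge_at_top)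
  have "\<forall>\<^sub>F n in at_top. norm (w n) \<le> 1 * norm (ln (real n))"
    using o by (rule landau_o.smallD) simp
  then show "\<forall>\<^sub>F n in at_top. w n \<le> ln (real n)"
    using n1 by eventually_elim auto
  show "filterlim (\<lambda>n. ln (real n) / w n) at_top at_top"
    unfolding filterlim_at_top
  proof
    fix Z :: real
    define M where "M = max Z 1"
    have Mp: "M > 0" by (simp add: M_def)
    have "\<forall>\<^sub>F n in at_top. norm (w n) \<le> (1/M) * norm (ln (real n))"
      using o Mp by (intro landau_o.smallD) auto
    moreover have "\<forall>\<^sub>F n in at_top. 2 \<le> w n" using lim by (simp add: filterlim_at_top)
    ultimately show "\<forall>\<^sub>F n in at_top. Z \<le> ln (real n) / w n" using n1
    proof eventually_elim
      case (elim n)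
      then have "w n \<le> (1/M) * ln (real n)" by simp
      then have "M * w n \<le> ln (real n)" using Mp by (simp add: field_simps)
      then have "M \<le> ln (real n) / w n" using elim by (simp add: field_simps)
      then show ?case by (simp add: M_def)
    qed
  qed
qed



lemma rho_le_pbar:
  assumes "0 \<le> x"
  shows "rho (\<lambda>i. x * p i) (i+1) \<le> x * p i \<or> x * p i < 0"
  by (auto simp: rho_def)

lemma rho_bounds:
  fixes tau :: real
  assumes n: "n > 0" and tau: "0 < tau" "tau \<le> 1" and i: "j + 1 \<le> i" "i \<le> d"
    and h0: "0 \<le> hh al be ga i n"
  shows "real (n choose (i - j)) * rho (\<lambda>i. tau * pbar j al be ga i n) (i+1) \<le> tau * hh al be ga i n"
    and "real (n choose (i - j - 1)) * rho (\<lambda>i. tau * pbar j al be ga i n) (i+1) \<le> fact d * hh al be ga i n / real n"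
    and "rho (\<lambda>i. tau * pbar j al be ga i n) (i+1) \<le> fact d * hh al be ga i n / real n"
proof -
  define s where "s = i - j"
  have s1: "s \<ge> 1" using i by (simp add: s_def)
  define N where "N = real n"
  have N1: "N \<ge> 1" using n by (simp add: N_def)
  define h where "h = hh al be ga i n"
  have pb: "pbar j al be ga i n = h * fact s / N ^ s"
    using pbar_eq[of j i n al be ga] i n by (simp add: h_def s_def N_def)
  have Ns: "N ^ s > 0" using N1 by simp
  have pnn: "0 \<le> tau * (h * fact s / N ^ s)" using tau h0 Ns by (simp add: h_def)
  have r: "rho (\<lambda>i. tau * pbar j al be ga i n) (i+1) \<le> tau * (h * fact s / N ^ s)"
    using pnn by (simp add: rho_def pb)
  have r0: "0 \<le> rho (\<lambda>i. tau * pbar j al be ga i n) (i+1)" by (rule rho_nonneg)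
  have Cf: "real (n choose s) * fact s \<le> N ^ s"
  proof -
    have "(n choose s) * fact s \<le> n ^ s" by (rule binomial_fact_pow)
    then have "real ((n choose s) * fact s) \<le> real (n ^ s)" by (simp only: of_nat_le_iff)
    then show ?thesis by (simp add: N_def)
  qed
  show "real (n choose (i - j)) * rho (\<lambda>i. tau * pbar j al be ga i n) (i+1) \<le> tau * hh al be ga i n"
  proof -
    have "real (n choose s) * rho (\<lambda>i. tau * pbar j al be ga i n) (i+1) \<le> real (n choose s) * (tau * (h * fact s / N ^ s))"
      using r by (intro mult_left_mono) auto
    also have "\<dots> = tau * h * ((real (n choose s) * fact s) / N ^ s)" by (simp add: field_simps)
    also have "\<dots> \<le> tau * h * 1"
      using Cf Ns tau h0 by (intro mult_left_mono) (auto simp: h_def)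
    finally show ?thesis by (simp add: s_def h_def)
  qed
  have fs: "fact s \<le> (fact d :: real)" using i by (intro fact_mono) (auto simp: s_def)
  have Cm: "real (n choose (s - 1)) \<le> N ^ (s - 1)"
  proof -
    have "(n choose (s-1)) * fact (s-1) \<le> n ^ (s-1)" by (rule binomial_fact_pow)
    moreover have "(n choose (s-1)) \<le> (n choose (s-1)) * fact (s-1)" by simp
    ultimately have "(n choose (s-1)) \<le> n ^ (s-1)" by linarith
    then have "real (n choose (s-1)) \<le> real (n ^ (s-1))" by (simp only: of_nat_le_iff)
    then show ?thesis by (simp add: N_def)
  qed
  have NsN: "N ^ s = N ^ (s - 1) * N" using s1 by (metis One_nat_def Suc_pred' less_le_trans power_Suc2 zero_less_one)
  show "real (n choose (i - j - 1)) * rho (\<lambda>i. tau * pbar j al be ga i n) (i+1) \<le> fact d * hh al be ga i n / real n"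
  proof -
    have "real (n choose (s - 1)) * rho (\<lambda>i. tau * pbar j al be ga i n) (i+1) \<le> N ^ (s - 1) * (tau * (h * fact s / N ^ s))"
      using r r0 Cm by (intro mult_mono) auto
    also have "\<dots> = tau * h * fact s / N" using NsN N1 by (simp add: field_simps)
    also have "\<dots> \<le> 1 * h * fact d / N"
      using tau h0 fs N1 by (intro divide_right_mono mult_mono) (auto simp: h_def)
    finally show ?thesis by (simp add: s_def h_def N_def mult.commute)
  qed
  show "rho (\<lambda>i. tau * pbar j al be ga i n) (i+1) \<le> fact d * hh al be ga i n / real n"
  proof -
    have "N \<le> N ^ s" using N1 s1 by (metis power_increasing power_one_right)
    have "tau * (h * fact s / N ^ s) \<le> 1 * (h * fact d / N)"
    proof (intro mult_mono)
      show "h * fact s / N ^ s \<le> h * fact d / N"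
        using \<open>N \<le> N ^ s\<close> fs h0 N1 by (intro frac_le mult_mono) (auto simp: h_def)
    qed (use tau h0 N1 in \<open>auto simp: h_def\<close>)
    then have "rho (\<lambda>i. tau * pbar j al be ga i n) (i+1) \<le> h * fact d / N" using r by simp
    then show ?thesis by (simp add: h_def N_def mult.commute)
  qed
qed




lemma sum_shift1: "(\<Sum>m\<in>{j+2..d+1}. f m) = (\<Sum>i\<in>{j+1..d}. f (i+1))" for f :: "nat \<Rightarrow> real"
proof -
  have "(\<Sum>m\<in>{Suc (j+1)..Suc d}. f m) = (\<Sum>i\<in>{j+1..d}. f (Suc i))"
    by (rule sum.shift_bounds_cl_Suc_ivl)
  then show ?thesis by simp
qed

lemma ev_bounds:
  fixes w :: "nat \<Rightarrow> real"
  assumes adm: "admissible d j al be ga" and j: "1 \<le> j" "j < d"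
    and A: "A = (\<Sum>i\<in>{j+1..d}. al i)" "A > 0"
    and o: "w \<in> o(\<lambda>n. ln (real n))" and lim: "filterlim w at_top at_top"
  defines "H \<equiv> \<lambda>n. (\<Sum>i\<in>{j+1..d}. hh al be ga i n)"
    and "qq \<equiv> \<lambda>n i. (1 - 1 / w n) * pbar j al be ga i n"
    and "et \<equiv> \<lambda>n. fact d * (A + 1) * ln (real n) / real n"
  shows "\<forall>\<^sub>F n in at_top.
           (\<forall>m\<in>{j+2..d+1}. rho (qq n) m \<le> et n)
         \<and> (\<Sum>m\<in>{j+2..d+1}. real (n choose (m - (j+1))) * rho (qq n) m) \<le> (1 - 1 / w n) * H n
         \<and> (\<Sum>m\<in>{j+2..d+1}. real (n choose (m - (j+2))) * rho (qq n) m) \<le> et n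
         \<and> (A/2) * ln (real n) \<le> H n \<and> H n \<le> (A + 1) * ln (real n)
         \<and> et n \<le> 1 / (2 * w n) \<and> 2 \<le> w n \<and> w n \<le> ln (real n) \<and> 0 < n"
proof -
  note W = omega_facts[OF o lim]
  have Ine: "{j+1..d} \<subseteq> {1..d}" "{j+1..d} \<noteq> {}" using j by auto
  have hb: "\<forall>\<^sub>F n in at_top. (A/2) * ln (real n) \<le> H n \<and> H n \<le> (A + 1) * ln (real n)"
    unfolding H_def by (rule sum_hh_bounds[OF adm Ine A])
  have as: "\<forall>\<^sub>F n in at_top. 2 * (fact d * (A + 1)) * (ln (real (n::nat)))^2 / real n \<le> 1"
    by real_asymp
  have n1: "\<forall>\<^sub>F n in at_top. (n::nat) \<ge> 1" by (rule eventually_ge_at_top)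
  from all_hh_nonneg[OF adm] hb as n1 W(1) W(2)
  show ?thesis
  proof eventually_elim
    case (elim n)
    have n0: "0 < n" using elim by simp
    have L0: "0 \<le> ln (real n)" using elim by simp
    define tau where "tau = 1 - 1 / w n"
    have tau: "0 < tau" "tau \<le> 1" using elim by (auto simp: tau_def field_simps)
    have qq: "qq n = (\<lambda>i. tau * pbar j al be ga i n)" by (simp add: qq_def tau_def)
    have hn: "0 \<le> hh al be ga i n" if "i \<in> {j+1..d}" for i using elim that j by auto
    have hH: "hh al be ga i n \<le> H n" if "i \<in> {j+1..d}" for i
      unfolding H_def using that hn by (intro member_le_sum) auto
    have HL: "H n \<le> (A + 1) * ln (real n)" using elim by simp
    have e1: "\<forall>m\<in>{j+2..d+1}. rho (qq n) m \<le> et n"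
    proof
      fix m assume m: "m \<in> {j+2..d+1}"
      define i where "i = m - 1"
      have i: "i \<in> {j+1..d}" "m = i + 1" using m by (auto simp: i_def)
      have "rho (qq n) m \<le> fact d * hh al be ga i n / real n"
        unfolding qq i(2) using rho_bounds(3)[OF n0 tau, of j i d al be ga] i hn by auto
      also have "\<dots> \<le> fact d * ((A + 1) * ln (real n)) / real n"
        using hH[OF i(1)] HL n0 by (intro divide_right_mono mult_left_mono) auto
      finally show "rho (qq n) m \<le> et n" by (simp add: et_def mult.assoc)
    qed
    have e2: "(\<Sum>m\<in>{j+2..d+1}. real (n choose (m - (j+1))) * rho (qq n) m) \<le> tau * H n"
    proof -
      have "(\<Sum>m\<in>{j+2..d+1}. real (n choose (m - (j+1))) * rho (qq n) m)
            = (\<Sum>i\<in>{j+1..d}. real (n choose (i - j)) * rho (qq n) (i+1))"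
        by (subst sum_shift1) simp
      also have "\<dots> \<le> (\<Sum>i\<in>{j+1..d}. tau * hh al be ga i n)"
        unfolding qq using rho_bounds(1)[OF n0 tau] hn by (intro sum_mono) auto
      also have "\<dots> = tau * H n" by (simp add: H_def sum_distrib_left)
      finally show ?thesis .
    qed
    have e3: "(\<Sum>m\<in>{j+2..d+1}. real (n choose (m - (j+2))) * rho (qq n) m) \<le> et n"
    proof -
      have "(\<Sum>m\<in>{j+2..d+1}. real (n choose (m - (j+2))) * rho (qq n) m)
            = (\<Sum>i\<in>{j+1..d}. real (n choose (i - j - 1)) * rho (qq n) (i+1))"
        by (subst sum_shift1) simp
      also have "\<dots> \<le> (\<Sum>i\<in>{j+1..d}. fact d * hh al be ga i n / real n)"
        unfolding qq using rho_bounds(2)[OF n0 tau] hn by (intro sum_mono) auto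
      also have "\<dots> = fact d * H n / real n" by (simp add: H_def sum_distrib_left sum_divide_distrib)
      also have "\<dots> \<le> fact d * ((A + 1) * ln (real n)) / real n"
        using HL n0 by (intro divide_right_mono mult_left_mono) auto
      finally show ?thesis by (simp add: et_def mult.assoc)
    qed
    have e5: "et n \<le> 1 / (2 * w n)"
    proof -
      have wp: "w n > 0" using elim by simp
      have "et n * (2 * w n) \<le> et n * (2 * ln (real n))"
        using elim L0 A n0 by (intro mult_left_mono) (auto simp: et_def)
      also have "\<dots> = 2 * (fact d * (A + 1)) * (ln (real n))^2 / real n"
        by (simp add: et_def power2_eq_square field_simps)
      also have "\<dots> \<le> 1" using elim by simp
      finally show ?thesis using wp by (simp add: field_simps)
    qed
    show ?case using e1 e2 e3 e5 elim n0 by (simp add: tau_def)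
  qed
qed



lemma B_identity:
  assumes adm: "admissible d j al be ga" and jk: "j \<le> k" and lam0: "lam d j al ga k = 0"
  shows "real (k + 1 - j) * (\<Sum>i\<in>{j+1..d}. hh al be ga i n)
         = (real j + 1 - ga k) * ln (real n) - mu d j al be ga k n
           + (if pbar j al be ga k n > 1 then 0 else if al k \<noteq> 0 then ln (ln (real n)) else ln (be k n))"
proof -
  define S where "S = (\<Sum>i\<in>{j+1..d}. be i n / real n powr ga i)"
  define A where "A = (\<Sum>i\<in>{j+1..d}. al i)"
  have I: "{j+1..d} \<subseteq> {1..d}" by auto
  have H: "(\<Sum>i\<in>{j+1..d}. hh al be ga i n) = A * ln (real n) + S"
    using sum_hh_eq[OF adm I] by (simp add: S_def A_def)
  have rk: "real (k + 1 - j) = real k - real j + 1" using jk by simp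
  have lam: "real j + 1 - ga k = (real k - real j + 1) * A"
    using lam0 by (simp add: lam_def A_def)
  show ?thesis
    unfolding H rk mu_def S_def[symmetric] lam by (simp add: algebra_simps)
qed

lemma log_bound:
  fixes w :: "nat \<Rightarrow> real"
  assumes adm: "admissible d j al be ga" and j: "1 \<le> j" "j < d"
    and cd: "critical_dim d j al be ga k"
    and lim: "filterlim w at_top at_top"
  defines "qq \<equiv> \<lambda>n i. (1 - 1 / w n) * pbar j al be ga i n"
  shows "\<exists>K. \<forall>\<^sub>F n in at_top. 0 < rho (qq n) (k+1) \<and>
             K \<le> real (k+1) * ln (real n) + ln (rho (qq n) (k+1))
                   - real (k + 1 - j) * (\<Sum>i\<in>{j+1..d}. hh al be ga i n)"
proof -
  have jk: "j \<le> k" "k \<le> d" and pnz: "pbar j al be ga k \<noteq> (\<lambda>n. 0)"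
    and lam0: "lam d j al ga k = 0" and muO: "mu d j al be ga k \<in> O(\<lambda>n. 1)"
    using cd by (auto simp: critical_dim_def)
  have kI: "k \<in> {1..d}" using jk j by auto
  note Ak = adm_i[OF adm kI]
  obtain M0 where M0: "M0 > 0" "\<forall>\<^sub>F n in at_top. norm (mu d j al be ga k n) \<le> M0 * norm (1::real)"
    using muO by (rule landau_o.bigE) blast
  define X where "X n = al k * ln (real n) + be k n" for n
  define Kc where "Kc = - M0 - ln 2 + min 0 (if al k \<noteq> 0 then ln (al k / 2) else 0)"
  have Xev: "\<forall>\<^sub>F n in at_top. 0 < X n \<and> (al k \<noteq> 0 \<longrightarrow> al k / 2 * ln (real n) \<le> X n)"
  proof (cases "al k = 0")
    case False
    then have alp: "al k > 0" and g0: "ga k = 0" using Ak by auto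
    have "\<forall>\<^sub>F n in at_top. \<bar>be k n / real n powr ga k\<bar> \<le> (al k / 2) * ln (real n)"
      using alp by (intro be_small[OF adm kI]) auto
    moreover have "\<forall>\<^sub>F n in at_top. (n::nat) \<ge> 3" by (rule eventually_ge_at_top)
    ultimately show ?thesis
    proof eventually_elim
      case (elim n)
      then have "\<bar>be k n\<bar> \<le> (al k / 2) * ln (real n)" using g0 by simp
      then have b: "- be k n \<le> (al k / 2) * ln (real n)" by (meson abs_le_D2)
      have "ln (real n) > 0" using elim by simp
      then have p: "al k * ln (real n) > 0" using alp by simp
      show ?case using b p by (simp add: X_def)
    qed
  next
    case True
    have "be k \<noteq> (\<lambda>n. 0)"
    proof
      assume "be k = (\<lambda>n. 0)"
      then have "pbar j al be ga k = (\<lambda>n. 0)" using True by (auto simp: pbar_def fun_eq_iff)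
      with pnz show False by simp
    qed
    then have "\<forall>\<^sub>F n in at_top. be k n > 0" using Ak True by blast
    then show ?thesis by eventually_elim (simp add: X_def True)
  qed
  have n3: "\<forall>\<^sub>F n in at_top. (n::nat) \<ge> 3" by (rule eventually_ge_at_top)
  have w2: "\<forall>\<^sub>F n in at_top. 2 \<le> w n" using lim by (simp add: filterlim_at_top)
  have "\<forall>\<^sub>F n in at_top. 0 < rho (qq n) (k+1) \<and>
             Kc \<le> real (k+1) * ln (real n) + ln (rho (qq n) (k+1))
                   - real (k + 1 - j) * (\<Sum>i\<in>{j+1..d}. hh al be ga i n)"
    using Xev n3 w2 M0(2)
  proof eventually_elim
    case (elim n)
    define L where "L = ln (real n)"
    have n0: "real n > 0" using elim by simp
    have L0: "L > 0" using elim by (simp add: L_def)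
    define tau where "tau = 1 - 1 / w n"
    have tau: "1/2 \<le> tau" "tau \<le> 1" using elim by (auto simp: tau_def field_simps)
    define E where "E = real k - real j + ga k"
    have X0: "X n > 0" using elim by simp
    have pb: "pbar j al be ga k n = X n / real n powr E * fact (k - j)"
      by (simp add: pbar_def X_def E_def)
    have pp: "pbar j al be ga k n > 0" unfolding pb using X0 n0 by simp
    have rho_eq: "rho (qq n) (k+1) = min (tau * pbar j al be ga k n) 1"
      using pp tau by (simp add: rho_def qq_def tau_def min_def max_def)
    have rpos: "0 < rho (qq n) (k+1)" unfolding rho_eq using pp tau by simp
    have muM: "- M0 \<le> mu d j al be ga k n" using elim by simp
    define LL where "LL = (if pbar j al be ga k n > 1 then 0 else if al k \<noteq> 0 then ln (ln (real n)) else ln (be k n))"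
    have Bid: "real (k + 1 - j) * (\<Sum>i\<in>{j+1..d}. hh al be ga i n)
         = (real j + 1 - ga k) * L - mu d j al be ga k n + LL"
      unfolding L_def LL_def by (rule B_identity[OF adm jk(1) lam0])
    have ga0: "ga k \<ge> 0" using Ak by simp
    have Kc1: "Kc \<le> - M0 - ln 2" by (simp add: Kc_def)
    have "Kc \<le> real (k+1) * L + ln (rho (qq n) (k+1)) - ((real j + 1 - ga k) * L - mu d j al be ga k n + LL)"
    proof (cases "pbar j al be ga k n > 1")
      case True
      then have LL0: "LL = 0" by (simp add: LL_def)
      have "1/2 \<le> rho (qq n) (k+1)"
      proof -
        have "tau * 1 \<le> tau * pbar j al be ga k n" using True tau by (intro mult_left_mono) auto
        then have "1/2 \<le> tau * pbar j al be ga k n" using tau by linarith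
        then show ?thesis unfolding rho_eq by simp
      qed
      then have "ln (1/2) \<le> ln (rho (qq n) (k+1))" by (subst ln_le_cancel_iff) auto
      then have lr: "- ln 2 \<le> ln (rho (qq n) (k+1))" by (simp add: ln_div)
      have "0 \<le> (real k - real j + ga k) * L" using jk ga0 L0 by (intro mult_nonneg_nonneg) auto
      then show ?thesis using lr muM Kc1 LL0 by (simp add: algebra_simps)
    next
      case False
      then have rho2: "rho (qq n) (k+1) = tau * pbar j al be ga k n"
        unfolding rho_eq using tau pp by (simp add: mult_le_one)
      have eq: "ln (rho (qq n) (k+1)) = ln tau + ln (X n) - E * L + ln (fact (k - j))"
        unfolding rho2 pb L_def using tau X0 n0
        by (simp add: ln_mult_pos ln_divide_pos ln_powr)
      have "ln (1/2) \<le> ln tau" using tau by (subst ln_le_cancel_iff) auto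
      then have lt: "- ln 2 \<le> ln tau" by (simp add: ln_div)
      have lf: "0 \<le> ln (fact (k - j) :: real)" by simp
      have lr: "- ln 2 + ln (X n) - E * L \<le> ln (rho (qq n) (k+1))" using eq lt lf by linarith
      have XL: "min 0 (if al k \<noteq> 0 then ln (al k / 2) else 0) \<le> ln (X n) - LL"
      proof (cases "al k = 0")
        case True
        then show ?thesis using False by (simp add: LL_def X_def)
      next
        case alne: False
        then have alp: "al k > 0" using Ak by auto
        have "al k / 2 * L \<le> X n" using elim alne by (simp add: L_def)
        then have "ln (al k / 2 * L) \<le> ln (X n)" using alp L0 X0 by (subst ln_le_cancel_iff) auto
        moreover have "ln (al k / 2 * L) = ln (al k / 2) + ln L" using alp L0 by (intro ln_mult_pos) auto
        ultimately have "ln (al k / 2) + ln L \<le> ln (X n)" by simp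
        then show ?thesis using False alne by (simp add: LL_def L_def)
      qed
      show ?thesis using lr XL muM by (simp add: Kc_def E_def algebra_simps)
    qed
    then show ?case using rpos Bid by (simp add: L_def)
  qed
  then show ?thesis by blast
qed



lemma mu_lower_ev:
  fixes w :: "nat \<Rightarrow> real"
  assumes adm: "admissible d j al be ga" and j: "1 \<le> j" "j < d"
    and cd: "critical_dim d j al be ga k"
    and A: "A = (\<Sum>i\<in>{j+1..d}. al i)" "A > 0"
    and o: "w \<in> o(\<lambda>n. ln (real n))" and lim: "filterlim w at_top at_top"
  defines "qq \<equiv> \<lambda>n i. (1 - 1 / w n) * pbar j al be ga i n"
  shows "\<exists>K. \<forall>\<^sub>F n in at_top.
           exp (K + (A/4) * (ln (real n) / w n))
           \<le> (\<Sum>a\<in>Conf n j k. measure_pmf.prob (random_edges n d (qq n)) {E. evc n d a E})"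
proof -
  have jk: "j \<le> k" "k \<le> d" using cd by (auto simp: critical_dim_def)
  obtain K where K: "\<forall>\<^sub>F n in at_top. 0 < rho (qq n) (k+1) \<and>
             K \<le> real (k+1) * ln (real n) + ln (rho (qq n) (k+1))
                   - real (k + 1 - j) * (\<Sum>i\<in>{j+1..d}. hh al be ga i n)"
    using log_bound[OF adm j cd lim] unfolding qq_def by blast
  define H where "H = (\<lambda>n. (\<Sum>i\<in>{j+1..d}. hh al be ga i n))"
  define et where "et = (\<lambda>n. fact d * (A + 1) * ln (real n) / real n)"
  have EB: "\<forall>\<^sub>F n in at_top.
           (\<forall>m\<in>{j+2..d+1}. rho (qq n) m \<le> et n)
         \<and> (\<Sum>m\<in>{j+2..d+1}. real (n choose (m - (j+1))) * rho (qq n) m) \<le> (1 - 1 / w n) * H n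
         \<and> (\<Sum>m\<in>{j+2..d+1}. real (n choose (m - (j+2))) * rho (qq n) m) \<le> et n
         \<and> (A/2) * ln (real n) \<le> H n \<and> H n \<le> (A + 1) * ln (real n)
         \<and> et n \<le> 1 / (2 * w n) \<and> 2 \<le> w n \<and> w n \<le> ln (real n) \<and> 0 < n"
    unfolding H_def et_def qq_def by (rule ev_bounds[OF adm j A o lim])
  have nk: "\<forall>\<^sub>F n in at_top. (n::nat) \<ge> k + 1" by (rule eventually_ge_at_top)
  define K' where "K' = K - real (k+1) * ln (real (k+1))"
  have "\<forall>\<^sub>F n in at_top.
           exp (K' + (A/4) * (ln (real n) / w n))
           \<le> (\<Sum>a\<in>Conf n j k. measure_pmf.prob (random_edges n d (qq n)) {E. evc n d a E})"
    using K EB nk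
  proof eventually_elim
    case (elim n)
    define L where "L = ln (real n)"
    define r where "r = rho (qq n) (k+1)"
    define tau where "tau = 1 - 1 / w n"
    define B where "B = real (k + 1 - j) * H n"
    define U where "U = real (k + 1 - j) * (\<Sum>m\<in>{j+2..d+1}. real (n choose (m - (j+1))) * rho (qq n) m)"
    have r0: "0 < r" using elim by (simp add: r_def)
    have wn: "2 \<le> w n" using elim by simp
    have et: "et n \<le> 1 / (2 * w n)" using elim by simp
    have et1: "et n < 1"
    proof -
      have "1 / (2 * w n) \<le> 1/4" using wn by (simp add: field_simps)
      then show ?thesis using et by linarith
    qed
    have etm: "\<And>m. m \<in> {j+2..d+1} \<Longrightarrow> rho (qq n) m \<le> et n" using elim by blast
    have Kb: "K \<le> real (k+1) * L + ln r - B" using elim by (simp add: L_def r_def B_def H_def)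
    have HA: "(A/2) * L \<le> H n" using elim by (simp add: L_def)
    have L0: "0 \<le> L" using elim by (simp add: L_def)
    have "0 \<le> (A/2) * L" using A L0 by simp
    then have H0: "0 \<le> H n" using HA by linarith
    have kj1: "1 \<le> real (k + 1 - j)" using jk by simp
    have B0: "0 \<le> B" using H0 kj1 by (simp add: B_def)
    have BH: "H n \<le> B"
    proof -
      have "1 * H n \<le> real (k + 1 - j) * H n" using H0 kj1 by (intro mult_right_mono) auto
      then show ?thesis by (simp add: B_def)
    qed
    have pa: "r * exp (- U / (1 - et n)) \<le> measure_pmf.prob (random_edges n d (qq n)) {E. evc n d a E}"
      if a: "a \<in> Conf n j k" for a
    proof -
      obtain K0 C0 where aa: "a = (K0, C0)" by force
      show ?thesis using pr_lower[of K0 C0 n j k d "et n" "qq n"] a aa et1 etm j jk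
        by (simp add: r_def U_def)
    qed
    have s1: "real (card (Conf n j k)) * (r * exp (- U / (1 - et n)))
              \<le> (\<Sum>a\<in>Conf n j k. measure_pmf.prob (random_edges n d (qq n)) {E. evc n d a E})"
    proof -
      have "(\<Sum>a\<in>Conf n j k. r * exp (- U / (1 - et n)))
            \<le> (\<Sum>a\<in>Conf n j k. measure_pmf.prob (random_edges n d (qq n)) {E. evc n d a E})"
        using pa by (intro sum_mono) auto
      then show ?thesis by simp
    qed
    define P where "P = (real n / real (k+1)) ^ (k+1)"
    have P0: "0 < P" using elim by (simp add: P_def)
    have cP: "P \<le> real (card (Conf n j k))"
    proof -
      have "P \<le> real (n choose (k+1))" unfolding P_def using elim by (intro binomial_ge_n_over_k_pow_k) simp
      also have "\<dots> \<le> real (card (Conf n j k))" using card_Conf_ge[OF jk(1), of n] by (simp only: of_nat_le_iff)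
      finally show ?thesis .
    qed
    have UB: "U \<le> tau * B"
    proof -
      have "U \<le> real (k + 1 - j) * ((1 - 1 / w n) * H n)"
        unfolding U_def using elim by (intro mult_left_mono) auto
      then show ?thesis by (simp add: tau_def B_def algebra_simps)
    qed
    have tau_le: "tau \<le> (1 - 1 / (2 * w n)) * (1 - et n)"
    proof -
      have e0: "0 \<le> et n" unfolding et_def using elim A by (auto intro!: divide_nonneg_nonneg mult_nonneg_nonneg)
      have "(1 - 1 / (2 * w n)) * (1 - et n) = 1 - 1 / (2 * w n) - et n + et n / (2 * w n)"
        using wn by (simp add: field_simps)
      moreover have "0 \<le> et n / (2 * w n)" using e0 wn by simp
      moreover have "1 / (2 * w n) + 1 / (2 * w n) = 1 / w n" using wn by (simp add: field_simps)
      ultimately show ?thesis using et by (simp add: tau_def)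
    qed
    have ex: "- B + B / (2 * w n) \<le> - U / (1 - et n)"
    proof -
      have d0: "0 < 1 - et n" using et1 by simp
      have "U / (1 - et n) \<le> tau * B / (1 - et n)" using UB d0 by (intro divide_right_mono) auto
      also have "\<dots> \<le> (1 - 1 / (2 * w n)) * (1 - et n) * B / (1 - et n)"
        using tau_le B0 d0 by (intro divide_right_mono mult_right_mono) auto
      also have "\<dots> = (1 - 1 / (2 * w n)) * B" using d0 by simp
      finally show ?thesis by (simp add: algebra_simps)
    qed
    have "P * r * exp (- B + B / (2 * w n)) \<le> real (card (Conf n j k)) * (r * exp (- U / (1 - et n)))"
    proof -
      have "P * r * exp (- B + B / (2 * w n)) \<le> P * r * exp (- U / (1 - et n))"
        using ex P0 r0 by (intro mult_left_mono) auto
      also have "\<dots> \<le> real (card (Conf n j k)) * (r * exp (- U / (1 - et n)))"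
        using cP r0 by (simp add: mult.assoc mult_right_mono)
      finally show ?thesis .
    qed
    have q0: "0 < real n / real (k+1)" using elim by simp
    have "ln P = real (k+1) * ln (real n / real (k+1))" unfolding P_def by (rule ln_realpow)
    also have "ln (real n / real (k+1)) = L - ln (real (k+1))"
      unfolding L_def using elim by (intro ln_divide_pos) auto
    finally have lnP: "ln P = real (k+1) * (L - ln (real (k+1)))" .
    have "P * r * exp (- B + B / (2 * w n)) = exp (ln P + ln r - B + B / (2 * w n))"
      using P0 r0 by (simp add: exp_add exp_diff)
    also have "ln P + ln r - B = real (k+1) * L + ln r - B - real (k+1) * ln (real (k+1))"
      by (simp add: lnP algebra_simps)
    finally have Pe: "P * r * exp (- B + B / (2 * w n))
       = exp (real (k+1) * L + ln r - B - real (k+1) * ln (real (k+1)) + B / (2 * w n))" .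
    have "(A/4) * (L / w n) \<le> B / (2 * w n)"
    proof -
      have "(A/4) * (L / w n) = ((A/2) * L) / (2 * w n)" by (simp add: field_simps)
      also have "\<dots> \<le> B / (2 * w n)" using HA BH wn by (intro divide_right_mono) auto
      finally show ?thesis .
    qed
    then have "K' + (A/4) * (L / w n) \<le> real (k+1) * L + ln r - B - real (k+1) * ln (real (k+1)) + B / (2 * w n)"
      using Kb by (simp add: K'_def)
    then have "exp (K' + (A/4) * (L / w n)) \<le> P * r * exp (- B + B / (2 * w n))"
      unfolding Pe by simp
    then show ?case using s1 \<open>P * r * exp (- B + B / (2 * w n)) \<le> _\<close> by (simp add: L_def)
  qed
  then show ?thesis by blast
qed



theorem lemma5p7:
  fixes d j :: nat and al ga :: "nat \<Rightarrow> real" and be :: "nat \<Rightarrow> nat \<Rightarrow> real"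
    and \<omega>0 :: "nat \<Rightarrow> real"
  assumes "d \<ge> 2" and "1 \<le> j" and "j \<le> d - 1"
    and "critical d j al be ga"
    and "\<omega>0 \<in> o(\<lambda>n. ln (real n))" and "filterlim \<omega>0 at_top at_top"
  shows "\<exists>c>0. \<forall>k. critical_dim d j al be ga k \<longrightarrow>
           ((\<lambda>n. measure_pmf.prob
                   (random_edges n d (\<lambda>i. (1 - 1 / \<omega>0 n) * pbar j al be ga i n))
                   {E. real (card (copies j k (complex_of n E)))
                         \<ge> exp (c * ln (real n) / \<omega>0 n)}) \<longlongrightarrow> 1) at_top"
proof -
  have adm: "admissible d j al be ga" using assms(4) by (simp add: critical_def)
  have j: "1 \<le> j" "j < d" using assms(1-3) by auto
  define A where "A = (\<Sum>i\<in>{j+1..d}. al i)"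
  have Apos: "A > 0"
  proof -
    obtain i where i: "i \<in> {j+1..d}" "al i > 0" using adm by (auto simp: admissible_def)
    have "\<And>i. i \<in> {j+1..d} \<Longrightarrow> 0 \<le> al i"
    proof -
      fix i assume "i \<in> {j+1..d}"
      then have "i \<in> {1..d}" using j by auto
      then show "0 \<le> al i" using adm_i[OF adm] by blast
    qed
    then show ?thesis unfolding A_def using i by (intro sum_pos2) auto
  qed
  note W = omega_facts[OF assms(5,6)]
  show ?thesis
  proof (intro exI[of _ "A/8"] conjI allI impI)
    show "A/8 > 0" using Apos by simp
    fix k assume cd: "critical_dim d j al be ga k"
    have jk: "j \<le> k" "k \<le> d" using cd by (auto simp: critical_dim_def)
    define qq where "qq = (\<lambda>n i. (1 - 1 / \<omega>0 n) * pbar j al be ga i n)"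
    define mu0 where "mu0 = (\<lambda>n. (\<Sum>a\<in>Conf n j k. measure_pmf.prob (random_edges n d (qq n)) {E. evc n d a E}))"
    obtain K where K: "\<forall>\<^sub>F n in at_top. exp (K + (A/4) * (ln (real n) / \<omega>0 n)) \<le> mu0 n"
      using mu_lower_ev[OF adm j cd A_def Apos assms(5,6)] unfolding mu0_def qq_def by blast
    define H where "H = (\<lambda>n. (\<Sum>i\<in>{j+1..d}. hh al be ga i n))"
    define et where "et = (\<lambda>n. fact d * (A + 1) * ln (real n) / real n)"
    define dl where "dl = (\<lambda>n. 2 * real ((k+1)^2) * et n)"
    define eps where "eps = (\<lambda>n. 4 * (2^(k+1) / mu0 n + exp (dl n) - 1))"
    define P where "P = (\<lambda>n. measure_pmf.prob (random_edges n d (qq n))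
                   {E. real (card (copies j k (complex_of n E))) \<ge> exp (A / 8 * ln (real n) / \<omega>0 n)})"
    have EB: "\<forall>\<^sub>F n in at_top.
           (\<forall>m\<in>{j+2..d+1}. rho (qq n) m \<le> et n)
         \<and> (\<Sum>m\<in>{j+2..d+1}. real (n choose (m - (j+1))) * rho (qq n) m) \<le> (1 - 1 / \<omega>0 n) * H n
         \<and> (\<Sum>m\<in>{j+2..d+1}. real (n choose (m - (j+2))) * rho (qq n) m) \<le> et n
         \<and> (A/2) * ln (real n) \<le> H n \<and> H n \<le> (A + 1) * ln (real n)
         \<and> et n \<le> 1 / (2 * \<omega>0 n) \<and> 2 \<le> \<omega>0 n \<and> \<omega>0 n \<le> ln (real n) \<and> 0 < n"
      unfolding H_def et_def qq_def by (rule ev_bounds[OF adm j A_def Apos assms(5,6)])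
    have big: "\<forall>\<^sub>F n in at_top. (ln 2 - K) * 8 / A \<le> ln (real n) / \<omega>0 n"
      using W(3) by (simp add: filterlim_at_top)
    have lower: "\<forall>\<^sub>F n in at_top. 1 - eps n \<le> P n"
      using EB K big
    proof eventually_elim
      case (elim n)
      define x where "x = ln (real n) / \<omega>0 n"
      have wn: "2 \<le> \<omega>0 n" using elim by simp
      have mupos: "mu0 n > 0" using elim(2) by (meson exp_gt_zero less_le_trans)
      have half: "\<And>m. m \<in> {j+2..d+1} \<Longrightarrow> rho (qq n) m \<le> 1/2"
      proof -
        fix m assume m: "m \<in> {j+2..d+1}"
        have "1 / (2 * \<omega>0 n) \<le> 1/2" using wn by (simp add: field_simps)
        moreover have "rho (qq n) m \<le> et n" using elim(1) m by blast
        moreover have "et n \<le> 1 / (2 * \<omega>0 n)" using elim(1) by blast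
        ultimately show "rho (qq n) m \<le> 1/2" by linarith
      qed
      have sb: "real ((k+1)^2) * (\<Sum>m\<in>{j+2..d+1}. real (n choose (m - (j+2))) * rho (qq n) m) \<le> dl n / 2"
      proof -
        have "real ((k+1)^2) * (\<Sum>m\<in>{j+2..d+1}. real (n choose (m - (j+2))) * rho (qq n) m)
              \<le> real ((k+1)^2) * et n" using elim by (intro mult_left_mono) auto
        then show ?thesis by (simp add: dl_def)
      qed
      have t: "exp (A / 8 * ln (real n) / \<omega>0 n) \<le> mu0 n / 2"
      proof -
        have "(ln 2 - K) * 8 / A \<le> x" using elim by (simp add: x_def)
        then have "ln 2 - K \<le> A / 8 * x" using Apos by (simp add: field_simps)
        then have "ln 2 + A / 8 * x \<le> K + (A/4) * x" by simp
        then have "exp (ln 2 + A / 8 * x) \<le> exp (K + (A/4) * x)" by simp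
        then have "2 * exp (A / 8 * x) \<le> exp (K + (A/4) * x)" by (simp add: exp_add)
        then have "2 * exp (A / 8 * x) \<le> mu0 n" using elim(2) by (simp add: x_def)
        then show ?thesis by (simp add: x_def)
      qed
      have "1 - 4 * (2^(k+1) / mu0 n + exp (dl n) - 1)
         \<le> measure_pmf.prob (random_edges n d (qq n)) {E. exp (A / 8 * ln (real n) / \<omega>0 n) \<le> real (card (copies j k (complex_of n E)))}"
        by (rule main_fixed_n[OF j(1) jk(1) jk(2) half sb _ mupos t]) (simp_all add: mu0_def)
      then show ?case by (simp add: eps_def P_def)
    qed
    have upper: "\<forall>\<^sub>F n in at_top. P n \<le> 1" by (simp add: P_def)
    have lowlim: "filterlim (\<lambda>n. exp (K + (A/4) * (ln (real n) / \<omega>0 n))) at_top at_top"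
    proof -
      have "filterlim (\<lambda>n. (A/4) * (ln (real n) / \<omega>0 n)) at_top at_top"
        using Apos by (intro filterlim_tendsto_pos_mult_at_top[OF tendsto_const _ W(3)]) auto
      then have "filterlim (\<lambda>n. K + (A/4) * (ln (real n) / \<omega>0 n)) at_top at_top"
        by (intro filterlim_tendsto_add_at_top[OF tendsto_const])
      then show ?thesis by (rule filterlim_compose[OF exp_at_top])
    qed
    have mulim: "filterlim mu0 at_top at_top"
      by (rule filterlim_at_top_mono[OF lowlim K])
    have l1: "((\<lambda>n. 2^(k+1) / mu0 n) \<longlongrightarrow> 0) at_top"
      by (intro tendsto_divide_0[OF tendsto_const] filterlim_at_top_imp_at_infinity mulim)
    have etlim: "(et \<longlongrightarrow> 0) at_top" unfolding et_def by real_asymp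
    have dllim: "(dl \<longlongrightarrow> 0) at_top" unfolding dl_def using tendsto_mult_right_zero[OF etlim] by simp
    have l2: "((\<lambda>n. exp (dl n)) \<longlongrightarrow> 1) at_top"
      using tendsto_exp[OF dllim] by simp
    have epslim: "((\<lambda>n. 1 - eps n) \<longlongrightarrow> 1) at_top"
    proof -
      have "((\<lambda>n. 1 - 4 * (2^(k+1) / mu0 n + exp (dl n) - 1)) \<longlongrightarrow> 1 - 4 * (0 + 1 - 1)) at_top"
        by (intro tendsto_intros l1 l2)
      then show ?thesis by (simp add: eps_def)
    qed
    have "(P \<longlongrightarrow> 1) at_top"
      by (rule tendsto_sandwich[OF lower upper epslim tendsto_const])
    then show "((\<lambda>n. measure_pmf.prob
                   (random_edges n d (\<lambda>i. (1 - 1 / \<omega>0 n) * pbar j al be ga i n))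
                   {E. real (card (copies j k (complex_of n E)))
                         \<ge> exp (A / 8 * ln (real n) / \<omega>0 n)}) \<longlongrightarrow> 1) at_top"
      by (simp add: P_def qq_def)
  qed
qed


end
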